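(* For all $\epsilon_1,\epsilon_2\ge0$ with $\epsilon_1+\sqrt{\epsilon_2}<1$ and any two channels $\mathcal{E},\mathcal{M}$ with the same input and output systems, $$D^{\epsilon_1}_H(\mathcal{E}\|\mathcal{M})\le D^{\epsilon_2}_{\max}(\mathcal{E}\|\mathcal{M})+\log\frac{1}{1-\epsilon_1-\sqrt{\epsilon_2}}.$$
   Context: Finite-dimensional Hilbert spaces, $\log$ base 2, channels are CPTP maps. For states: $F(\rho,\sigma)=\|\sqrt\rho\sqrt\sigma\|_1^2$; $D_{\max}(\rho\|\sigma)=\inf\{\lambda:\rho\le2^\lambda\sigma\}$; $D^\epsilon_H(\rho\|\sigma)=\sup\{-\log\mathrm{Tr}[P\sigma]:0\le P\le\mathbb{1},\mathrm{Tr}[P\rho]\ge1-\epsilon\}$. For channels: $F(\mathcal{E}_1,\mathcal{E}_2)=\min_\psi F((\mathrm{id}\otimes\mathcal{E}_1)(\psi),(\mathrm{id}\otimes\mathcal{E}_2)(\psi))$ over pure $\psi$ on reference $\otimes$ input; $D^\epsilon_H(\mathcal{E}\|\mathcal{M})=\sup_\psi D^\epsilon_H((\mathrm{id}\otimes\mathcal{E})(\psi)\|(\mathrm{id}\otimes\mathcal{M})(\psi))$; $D^\epsilon_{\max}(\mathcal{E}\|\mathcal{M})=\inf\{\sup_\psi D_{\max}((\mathrm{id}\otimes\mathcal{E}')(\psi)\|(\mathrm{id}\otimes\mathcal{M})(\psi)):\mathcal{E}'\text{ a channel with }F(\mathcal{E}',\mathcal{E})\ge1-\epsilon\}$. *)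

theory Defs
  imports "HOL-Analysis.Analysis" "Jordan_Normal_Form.Matrix"
begin

definition adj :: "complex mat \<Rightarrow> complex mat" where
  "adj A = mat (dim_col A) (dim_row A) (\<lambda>(i,j). cnj (A $$ (j,i)))"

definition tr :: "complex mat \<Rightarrow> complex" where
  "tr A = (\<Sum>i<dim_row A. A $$ (i,i))"

definition psd :: "nat \<Rightarrow> complex mat \<Rightarrow> bool" where
  "psd n A \<longleftrightarrow> A \<in> carrier_mat n n \<and>
     (\<forall>v \<in> carrier_vec n. let q = (\<Sum>i<n. \<Sum>j<n. cnj (v $ i) * A $$ (i,j) * v $ j)
                            in Im q = 0 \<and> Re q \<ge> 0)"

definition loewner_le :: "nat \<Rightarrow> complex mat \<Rightarrow> complex mat \<Rightarrow> bool" where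
  "loewner_le n A B \<longleftrightarrow> A \<in> carrier_mat n n \<and> B \<in> carrier_mat n n \<and> psd n (B - A)"

definition msqrt :: "complex mat \<Rightarrow> complex mat" where
  "msqrt A = (THE B. psd (dim_row A) B \<and> B * B = A)"

definition trace_norm :: "complex mat \<Rightarrow> real" where
  "trace_norm X = Re (tr (msqrt (adj X * X)))"

definition fidelity :: "complex mat \<Rightarrow> complex mat \<Rightarrow> real" where
  "fidelity \<rho> \<sigma> = (trace_norm (msqrt \<rho> * msqrt \<sigma>))\<^sup>2"

text \<open>Pure states on reference (dimension k) tensor input (dimension d); the reference
  index is the outer (most significant) index: basis vector (a,i) has index a*d+i.\<close>

definition pure_states :: "nat \<Rightarrow> nat \<Rightarrow> complex mat set" where
  "pure_states k d = {mat (k*d) (k*d) (\<lambda>(i,j). v $ i * cnj (v $ j)) | v.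
       v \<in> carrier_vec (k*d) \<and> (\<Sum>i<k*d. (cmod (v $ i))\<^sup>2) = 1}"

text \<open>(id_k \<otimes> E) applied to a (k*din) x (k*din) matrix: E acts on each block.\<close>

definition block :: "nat \<Rightarrow> complex mat \<Rightarrow> nat \<Rightarrow> nat \<Rightarrow> complex mat" where
  "block d X a b = mat d d (\<lambda>(i,j). X $$ (a*d+i, b*d+j))"

definition id_tensor :: "nat \<Rightarrow> nat \<Rightarrow> nat \<Rightarrow> (complex mat \<Rightarrow> complex mat) \<Rightarrow> complex mat \<Rightarrow> complex mat" where
  "id_tensor k din dout E X =
     mat (k*dout) (k*dout) (\<lambda>(r,c). E (block din X (r div dout) (c div dout)) $$ (r mod dout, c mod dout))"

definition channel :: "nat \<Rightarrow> nat \<Rightarrow> (complex mat \<Rightarrow> complex mat) \<Rightarrow> bool" where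
  "channel din dout E \<longleftrightarrow>
     (\<forall>X \<in> carrier_mat din din. E X \<in> carrier_mat dout dout) \<and>
     (\<forall>X \<in> carrier_mat din din. \<forall>Y \<in> carrier_mat din din. E (X + Y) = E X + E Y) \<and>
     (\<forall>X \<in> carrier_mat din din. \<forall>c. E (c \<cdot>\<^sub>m X) = c \<cdot>\<^sub>m E X) \<and>
     (\<forall>X \<in> carrier_mat din din. tr (E X) = tr X) \<and>
     (\<forall>k X. psd (k*din) X \<longrightarrow> psd (k*dout) (id_tensor k din dout E X))"

definition neglog2 :: "real \<Rightarrow> ereal" where
  "neglog2 t = (if t \<le> 0 then \<infinity> else ereal (- log 2 t))"

definition DH :: "real \<Rightarrow> nat \<Rightarrow> complex mat \<Rightarrow> complex mat \<Rightarrow> ereal" where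
  "DH \<epsilon> n \<rho> \<sigma> = Sup {neglog2 (Re (tr (P * \<sigma>))) | P.
       psd n P \<and> loewner_le n P (1\<^sub>m n) \<and> Re (tr (P * \<rho>)) \<ge> 1 - \<epsilon>}"

definition Dmax :: "nat \<Rightarrow> complex mat \<Rightarrow> complex mat \<Rightarrow> ereal" where
  "Dmax n \<rho> \<sigma> = Inf {ereal l | l. loewner_le n \<rho> (complex_of_real (2 powr l) \<cdot>\<^sub>m \<sigma>)}"

definition channel_fidelity :: "nat \<Rightarrow> nat \<Rightarrow> (complex mat \<Rightarrow> complex mat) \<Rightarrow> (complex mat \<Rightarrow> complex mat) \<Rightarrow> real" where
  "channel_fidelity din dout E1 E2 = Inf {fidelity (id_tensor k din dout E1 \<psi>) (id_tensor k din dout E2 \<psi>) | k \<psi>.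
       \<psi> \<in> pure_states k din}"

definition channel_DH :: "real \<Rightarrow> nat \<Rightarrow> nat \<Rightarrow> (complex mat \<Rightarrow> complex mat) \<Rightarrow> (complex mat \<Rightarrow> complex mat) \<Rightarrow> ereal" where
  "channel_DH \<epsilon> din dout E M = Sup {DH \<epsilon> (k*dout) (id_tensor k din dout E \<psi>) (id_tensor k din dout M \<psi>) | k \<psi>.
       \<psi> \<in> pure_states k din}"

definition channel_Dmax_smooth :: "real \<Rightarrow> nat \<Rightarrow> nat \<Rightarrow> (complex mat \<Rightarrow> complex mat) \<Rightarrow> (complex mat \<Rightarrow> complex mat) \<Rightarrow> ereal" where
  "channel_Dmax_smooth \<epsilon> din dout E M = Inf {Sup {Dmax (k*dout) (id_tensor k din dout E' \<psi>) (id_tensor k din dout M \<psi>) | k \<psi>.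
       \<psi> \<in> pure_states k din} | E'. channel din dout E' \<and> channel_fidelity din dout E' E \<ge> 1 - \<epsilon>}"

end

theory Submission
  imports Defs "Jordan_Normal_Form.Spectral_Radius" "Jordan_Normal_Form.Schur_Decomposition"
begin

lemma mult_idx: assumes "A \<in> carrier_mat n m" "B \<in> carrier_mat m p" "i < n" "j < p"
  shows "(A * B) $$ (i,j) = (\<Sum>k<m. A $$ (i,k) * B $$ (k,j))"
  using assms by (auto simp: scalar_prod_def lessThan_atLeast0 intro!: sum.cong)

lemma mult_vec_idx: assumes "A \<in> carrier_mat n m" "v \<in> carrier_vec m" "i < n"
  shows "(A *\<^sub>v v) $ i = (\<Sum>k<m. A $$ (i,k) * v $ k)"
  using assms by (auto simp: scalar_prod_def lessThan_atLeast0 intro!: sum.cong)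

lemma adj_carrier[simp]: "A \<in> carrier_mat nr nc \<Longrightarrow> adj A \<in> carrier_mat nc nr"
  by (auto simp: adj_def)

lemma adj_dims[simp]: "dim_row (adj A) = dim_col A" "dim_col (adj A) = dim_row A"
  by (auto simp: adj_def)

lemma adj_idx[simp]: "i < dim_col A \<Longrightarrow> j < dim_row A \<Longrightarrow> adj A $$ (i,j) = cnj (A $$ (j,i))"
  by (auto simp: adj_def)

lemma adj_adj[simp]: "adj (adj A) = A"
  by (rule eq_matI, auto)

lemma adj_mult: assumes A: "A \<in> carrier_mat n m" and B: "B \<in> carrier_mat m p"
  shows "adj (A * B) = adj B * adj A"
proof (rule eq_matI)
  fix i j assume "i < dim_row (adj B * adj A)" "j < dim_col (adj B * adj A)"
  then have ij: "i < p" "j < n" using assms by auto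
  have "adj (A * B) $$ (i, j) = cnj ((A * B) $$ (j, i))" using ij A B by simp
  also have "\<dots> = cnj (\<Sum>k<m. A $$ (j,k) * B $$ (k,i))" using mult_idx[OF A B, of j i] ij by simp
  also have "\<dots> = (\<Sum>k<m. adj B $$ (i,k) * adj A $$ (k,j))"
    using ij A B by (auto simp: mult.commute intro!: sum.cong)
  also have "\<dots> = (adj B * adj A) $$ (i, j)" using mult_idx[of "adj B" p m "adj A" n i j] ij A B by simp
  finally show "adj (A * B) $$ (i, j) = (adj B * adj A) $$ (i, j)" .
qed (use assms in auto)

lemma adj_add: assumes "A \<in> carrier_mat n m" "B \<in> carrier_mat n m"
  shows "adj (A + B) = adj A + adj B"
  by (rule eq_matI, insert assms, auto)

lemma adj_minus: assumes "A \<in> carrier_mat n m" "B \<in> carrier_mat n m"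
  shows "adj (A - B) = adj A - adj B"
  by (rule eq_matI, insert assms, auto)

lemma adj_smult: "adj (c \<cdot>\<^sub>m A) = cnj c \<cdot>\<^sub>m adj A"
  by (rule eq_matI, auto)

lemma adj_one[simp]: "adj (1\<^sub>m n) = 1\<^sub>m n"
  by (rule eq_matI, auto)

lemma adj_zero[simp]: "adj (0\<^sub>m n m) = 0\<^sub>m m n"
  by (rule eq_matI, auto)

lemma tr_sum: "A \<in> carrier_mat n n \<Longrightarrow> tr A = (\<Sum>i<n. A $$ (i,i))"
  by (simp add: tr_def)

lemma tr_mult_sum: assumes A: "A \<in> carrier_mat n m" and B: "B \<in> carrier_mat m n"
  shows "tr (A * B) = (\<Sum>i<n. \<Sum>k<m. A $$ (i,k) * B $$ (k,i))"
proof -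
  have "tr (A * B) = (\<Sum>i<n. (A * B) $$ (i,i))" using A B by (intro tr_sum) auto
  also have "\<dots> = (\<Sum>i<n. \<Sum>k<m. A $$ (i,k) * B $$ (k,i))"
    by (rule sum.cong[OF refl], rule mult_idx[OF A B]) auto
  finally show ?thesis .
qed

lemma tr_comm: assumes "A \<in> carrier_mat n m" "B \<in> carrier_mat m n"
  shows "tr (A * B) = tr (B * A)"
proof -
  have "tr (A * B) = (\<Sum>i<n. \<Sum>k<m. A $$ (i,k) * B $$ (k,i))"
    using assms by (rule tr_mult_sum)
  also have "\<dots> = (\<Sum>k<m. \<Sum>i<n. B $$ (k,i) * A $$ (i,k))"
    by (subst sum.swap) (simp add: mult.commute)
  also have "\<dots> = tr (B * A)"
    using assms by (simp add: tr_mult_sum)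
  finally show ?thesis .
qed

lemma tr_add: assumes "A \<in> carrier_mat n n" "B \<in> carrier_mat n n"
  shows "tr (A + B) = tr A + tr B"
  using assms by (simp add: tr_def sum.distrib)

lemma tr_minus: assumes "A \<in> carrier_mat n n" "B \<in> carrier_mat n n"
  shows "tr (A - B) = tr A - tr B"
  using assms by (simp add: tr_def sum_subtractf)

lemma tr_smult: "A \<in> carrier_mat n n \<Longrightarrow> tr (c \<cdot>\<^sub>m A) = c * tr A"
  by (simp add: tr_def sum_distrib_left)

lemma tr_adj: assumes "A \<in> carrier_mat n n" shows "tr (adj A) = cnj (tr A)"
  using assms by (simp add: tr_def)

lemma tr_one: "tr (1\<^sub>m n) = of_nat n"
  by (simp add: tr_def)

lemma cip_sum: "v \<in> carrier_vec n \<Longrightarrow> w \<in> carrier_vec n \<Longrightarrow> v \<bullet>c w = (\<Sum>i<n. v $ i * cnj (w $ i))"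
  by (auto simp: scalar_prod_def lessThan_atLeast0 intro!: sum.cong)

lemma adj_cip: assumes C: "C \<in> carrier_mat n m" and x: "x \<in> carrier_vec n" and v: "v \<in> carrier_vec m"
  shows "(adj C *\<^sub>v x) \<bullet>c v = x \<bullet>c (C *\<^sub>v v)"
proof -
  have "(adj C *\<^sub>v x) \<bullet>c v = (\<Sum>i<m. (adj C *\<^sub>v x) $ i * cnj (v $ i))"
    using mult_mat_vec_carrier[OF adj_carrier[OF C] x] v by (intro cip_sum)
  also have "\<dots> = (\<Sum>i<m. (\<Sum>k<n. cnj (C $$ (k,i)) * x $ k) * cnj (v $ i))"
  proof (rule sum.cong[OF refl])
    fix i assume "i \<in> {..<m}"
    then have i: "i < m" by simp
    have "(adj C *\<^sub>v x) $ i = (\<Sum>k<n. adj C $$ (i,k) * x $ k)"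
      using mult_vec_idx[OF adj_carrier[OF C] x i] .
    also have "\<dots> = (\<Sum>k<n. cnj (C $$ (k,i)) * x $ k)"
      using C i by (intro sum.cong[OF refl]) auto
    finally show "(adj C *\<^sub>v x) $ i * cnj (v $ i) = (\<Sum>k<n. cnj (C $$ (k,i)) * x $ k) * cnj (v $ i)" by simp
  qed
  also have "\<dots> = (\<Sum>i<m. \<Sum>k<n. cnj (C $$ (k,i)) * x $ k * cnj (v $ i))"
    by (simp only: sum_distrib_right)
  also have "\<dots> = (\<Sum>k<n. \<Sum>i<m. cnj (C $$ (k,i)) * x $ k * cnj (v $ i))"
    by (rule sum.swap)
  also have "\<dots> = (\<Sum>k<n. x $ k * (\<Sum>i<m. cnj (C $$ (k,i) * v $ i)))"
    by (simp only: sum_distrib_left complex_cnj_mult mult_ac)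
  also have "\<dots> = (\<Sum>k<n. x $ k * cnj (\<Sum>i<m. C $$ (k,i) * v $ i))"
    by (simp only: cnj_sum)
  also have "\<dots> = (\<Sum>k<n. x $ k * cnj ((C *\<^sub>v v) $ k))"
    by (rule sum.cong[OF refl]) (simp add: mult_vec_idx[OF C v])
  also have "\<dots> = x \<bullet>c (C *\<^sub>v v)"
    using assms by (intro cip_sum[symmetric]) auto
  finally show ?thesis .
qed

lemma cip_comm_cnj: "v \<in> carrier_vec n \<Longrightarrow> w \<in> carrier_vec n \<Longrightarrow> w \<bullet>c v = cnj (v \<bullet>c w)"
  by (simp add: cip_sum[of _ n] mult.commute)

lemma cip_self_real: "v \<in> carrier_vec n \<Longrightarrow> v \<bullet>c v = of_real (\<Sum>i<n. (cmod (v $ i))\<^sup>2)"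
proof -
  have "\<And>z. z * cnj z = complex_of_real ((cmod z)\<^sup>2)"
    by (simp add: complex_mult_cnj cmod_power2)
  then show "v \<in> carrier_vec n \<Longrightarrow> v \<bullet>c v = of_real (\<Sum>i<n. (cmod (v $ i))\<^sup>2)"
    by (simp add: cip_sum[of _ n])
qed

lemma cip_self_ge0: "v \<in> carrier_vec n \<Longrightarrow> Re (v \<bullet>c v) \<ge> 0 \<and> Im (v \<bullet>c v) = 0"
  by (simp add: cip_self_real[of _ n] sum_nonneg)

lemma cip_self_0: fixes v :: "complex vec" assumes "v \<in> carrier_vec n" "v \<bullet>c v = 0" shows "v = 0\<^sub>v n"
proof -
  have "(\<Sum>i<n. (cmod (v $ i))\<^sup>2) = 0" using assms cip_self_real[of v n] by simp
  then have "\<forall>i\<in>{..<n}. (cmod (v $ i))\<^sup>2 = 0" by (subst sum_nonneg_eq_0_iff[symmetric]) auto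
  then show ?thesis using assms by (auto intro!: eq_vecI)
qed

lemma qf_eq: assumes "A \<in> carrier_mat n n" "v \<in> carrier_vec n"
  shows "(\<Sum>i<n. \<Sum>j<n. cnj (v $ i) * A $$ (i,j) * v $ j) = (A *\<^sub>v v) \<bullet>c v"
proof -
  have "(A *\<^sub>v v) \<bullet>c v = (\<Sum>i<n. (A *\<^sub>v v) $ i * cnj (v $ i))"
    using assms by (intro cip_sum) auto
  also have "\<dots> = (\<Sum>i<n. (\<Sum>j<n. A $$ (i,j) * v $ j) * cnj (v $ i))"
    by (rule sum.cong[OF refl]) (use assms in \<open>auto simp: mult_vec_idx[of _ n n] simp del: index_mult_mat_vec\<close>)
  finally show ?thesis by (simp add: sum_distrib_right sum_distrib_left mult_ac)
qed

lemma psd_def2: "psd n A \<longleftrightarrow> A \<in> carrier_mat n n \<and>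
   (\<forall>v \<in> carrier_vec n. Im ((A *\<^sub>v v) \<bullet>c v) = 0 \<and> Re ((A *\<^sub>v v) \<bullet>c v) \<ge> 0)"
proof (cases "A \<in> carrier_mat n n")
  case True
  have "\<And>v. v \<in> carrier_vec n \<Longrightarrow> (\<Sum>i<n. \<Sum>j<n. cnj (v $ i) * A $$ (i,j) * v $ j) = (A *\<^sub>v v) \<bullet>c v"
    using True by (rule qf_eq)
  then show ?thesis unfolding psd_def Let_def using True by simp
qed (simp add: psd_def)

lemma psdD: "psd n A \<Longrightarrow> v \<in> carrier_vec n \<Longrightarrow> Im ((A *\<^sub>v v) \<bullet>c v) = 0 \<and> Re ((A *\<^sub>v v) \<bullet>c v) \<ge> 0"
  unfolding psd_def2 by auto

lemma psd_carrier: "psd n A \<Longrightarrow> A \<in> carrier_mat n n"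
  unfolding psd_def by auto

lemma psd_congr: assumes "psd n A" "C \<in> carrier_mat n m"
  shows "psd m (adj C * A * C)"
  unfolding psd_def2
proof (intro conjI ballI)
  have A: "A \<in> carrier_mat n n" using assms psd_carrier by auto
  then show "adj C * A * C \<in> carrier_mat m m" using assms by auto
  fix v :: "complex vec" assume v: "v \<in> carrier_vec m"
  have "(adj C * A * C) *\<^sub>v v = (adj C * A) *\<^sub>v (C *\<^sub>v v)"
    using A assms v by (intro assoc_mult_mat_vec[of _ m n _ m]) auto
  also have "\<dots> = adj C *\<^sub>v (A *\<^sub>v (C *\<^sub>v v))"
    using A assms v by (intro assoc_mult_mat_vec[of _ m n _ n]) auto
  finally have "(adj C * A * C) *\<^sub>v v = adj C *\<^sub>v (A *\<^sub>v (C *\<^sub>v v))" .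
  then have "((adj C * A * C) *\<^sub>v v) \<bullet>c v = (A *\<^sub>v (C *\<^sub>v v)) \<bullet>c (C *\<^sub>v v)"
    using A assms v by (simp add: adj_cip[of _ n m])
  then show "Im (((adj C * A * C) *\<^sub>v v) \<bullet>c v) = 0" "0 \<le> Re (((adj C * A * C) *\<^sub>v v) \<bullet>c v)"
    using psdD[OF assms(1), of "C *\<^sub>v v"] assms v by auto
qed

lemma ob_mult: "(of_bool P * (x::complex)) = (if P then x else 0)" by simp

lemma delta_sum1: "b < (n::nat) \<Longrightarrow> (\<Sum>j<n. of_bool (j = b) * (g j :: complex)) = g b"
  unfolding ob_mult by (subst sum.delta) auto

lemma delta_sum2: "a < (n::nat) \<Longrightarrow> b < n \<Longrightarrow>
  (\<Sum>i<n. \<Sum>j<n. of_bool (i = a) * of_bool (j = b) * (f i j :: complex)) = f a b"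
proof -
  assume a: "a < n" and b: "b < n"
  have "(\<Sum>i<n. \<Sum>j<n. of_bool (i = a) * of_bool (j = b) * f i j) = (\<Sum>i<n. of_bool (i = a) * f i b)"
  proof (rule sum.cong[OF refl])
    fix i show "(\<Sum>j<n. of_bool (i = a) * of_bool (j = b) * f i j) = of_bool (i = a) * f i b"
      using delta_sum1[OF b, of "\<lambda>j. of_bool (i = a) * f i j"] by (simp add: mult_ac)
  qed
  also have "\<dots> = f a b" using delta_sum1[OF a] .
  finally show ?thesis .
qed

lemma qf_two: fixes c :: complex assumes A: "A \<in> carrier_mat n n" and a: "a < n" and b: "b < n"
  defines "v \<equiv> vec n (\<lambda>k. of_bool (k = a) + c * of_bool (k = b))"
  shows "(\<Sum>i<n. \<Sum>j<n. cnj (v $ i) * A $$ (i,j) * v $ j) =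
     A $$ (a,a) + c * A $$ (a,b) + cnj c * A $$ (b,a) + cnj c * c * A $$ (b,b)"
proof -
  have "(\<Sum>i<n. \<Sum>j<n. cnj (v $ i) * A $$ (i,j) * v $ j) =
    (\<Sum>i<n. \<Sum>j<n. of_bool (i = a) * of_bool (j = a) * A $$ (i,j)
       + c * (of_bool (i = a) * of_bool (j = b) * A $$ (i,j))
       + cnj c * (of_bool (i = b) * of_bool (j = a) * A $$ (i,j))
       + cnj c * c * (of_bool (i = b) * of_bool (j = b) * A $$ (i,j)))"
    unfolding v_def by (intro sum.cong refl) (simp add: algebra_simps)
  also have "\<dots> = A $$ (a,a) + c * A $$ (a,b) + cnj c * A $$ (b,a) + cnj c * c * A $$ (b,b)"
    using a b by (simp only: sum.distrib sum_distrib_left[symmetric] delta_sum2)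
  finally show ?thesis .
qed

lemma psd_herm: assumes "psd n A" shows "adj A = A"
proof -
  have A: "A \<in> carrier_mat n n" using assms by (simp add: psd_def)
  have re: "Im (A $$ (a,a) + c * A $$ (a,b) + cnj c * A $$ (b,a) + cnj c * c * A $$ (b,b)) = 0"
    if "a < n" "b < n" for a b c
  proof -
    let ?v = "vec n (\<lambda>k. of_bool (k = a) + c * of_bool (k = b))"
    have "?v \<in> carrier_vec n" by simp
    then have q: "Im (\<Sum>i<n. \<Sum>j<n. cnj (?v $ i) * A $$ (i,j) * ?v $ j) = 0"
      using assms unfolding psd_def Let_def by blast
    from q[unfolded qf_two[OF A that, of c]] show ?thesis .
  qed
  show ?thesis
  proof (rule eq_matI)
    fix i j assume "i < dim_row A" "j < dim_col A"
    then have ij: "i < n" "j < n" using A by auto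
    have d: "Im (A $$ (k,k)) = 0" if "k < n" for k using re[OF that that, of 0] by simp
    have 1: "Im (A $$ (i,j) + A $$ (j,i)) = 0" using re[OF ij, of 1] d ij by simp
    have 2: "Re (A $$ (i,j) - A $$ (j,i)) = 0" using re[OF ij, of \<i>] d ij by (simp add: algebra_simps)
    show "adj A $$ (i, j) = A $$ (i, j)" using ij A 1 2 by (auto simp: complex_eq_iff)
  qed (use A in auto)
qed

definition unitary :: "nat \<Rightarrow> complex mat \<Rightarrow> bool" where
  "unitary n U \<longleftrightarrow> U \<in> carrier_mat n n \<and> adj U * U = 1\<^sub>m n \<and> U * adj U = 1\<^sub>m n"

lemma unitaryI: assumes U: "U \<in> carrier_mat n n" and "adj U * U = 1\<^sub>m n" shows "unitary n U"
  using mat_mult_left_right_inverse[OF adj_carrier[OF U] U assms(2)] assms unfolding unitary_def by auto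

lemma unitary_mult: assumes "unitary n U" "unitary n V" shows "unitary n (U * V)"
proof -
  have U: "U \<in> carrier_mat n n" and V: "V \<in> carrier_mat n n" and UU: "adj U * U = 1\<^sub>m n" and VV: "adj V * V = 1\<^sub>m n"
    using assms unfolding unitary_def by auto
  have "adj (U * V) * (U * V) = adj V * (adj U * (U * V))"
    unfolding adj_mult[OF U V] using U V by (intro assoc_mult_mat[of _ n n _ n _ n]) auto
  also have "adj U * (U * V) = (adj U * U) * V"
    using U V by (intro assoc_mult_mat[of _ n n _ n _ n, symmetric]) auto
  also have "\<dots> = V" using UU V by simp
  also have "adj V * V = 1\<^sub>m n" using VV .
  finally show ?thesis using U V by (intro unitaryI) auto
qed

lemma cip_smult: assumes "x \<in> carrier_vec n" "y \<in> carrier_vec n"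
  shows "(a \<cdot>\<^sub>v x) \<bullet>c (b \<cdot>\<^sub>v y) = a * cnj b * (x \<bullet>c y)"
proof -
  have "(a \<cdot>\<^sub>v x) \<bullet>c (b \<cdot>\<^sub>v y) = (\<Sum>i<n. (a \<cdot>\<^sub>v x) $ i * cnj ((b \<cdot>\<^sub>v y) $ i))"
    using assms by (intro cip_sum) auto
  also have "\<dots> = (\<Sum>i<n. a * cnj b * (x $ i * cnj (y $ i)))"
    using assms by (intro sum.cong refl) (simp add: mult_ac)
  also have "\<dots> = a * cnj b * (x \<bullet>c y)"
    using assms by (simp add: cip_sum[of _ n] sum_distrib_left)
  finally show ?thesis .
qed

definition nrm :: "complex vec \<Rightarrow> complex vec" where
  "nrm w = complex_of_real (1 / sqrt (Re (w \<bullet>c w))) \<cdot>\<^sub>v w"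

lemma nrm_carrier[simp]: "w \<in> carrier_vec n \<Longrightarrow> nrm w \<in> carrier_vec n"
  by (simp add: nrm_def)

lemma nrm_cip: assumes "x \<in> carrier_vec n" "y \<in> carrier_vec n"
  shows "nrm x \<bullet>c nrm y = complex_of_real (1 / sqrt (Re (x \<bullet>c x)) * (1 / sqrt (Re (y \<bullet>c y)))) * (x \<bullet>c y)"
  unfolding nrm_def using assms by (subst cip_smult[of _ n]) auto

lemma nrm_self: assumes "x \<in> carrier_vec n" "x \<bullet>c x \<noteq> 0" shows "nrm x \<bullet>c nrm x = 1"
proof -
  define r where "r = Re (x \<bullet>c x)"
  have r: "x \<bullet>c x = complex_of_real r" "r \<ge> 0" using cip_self_ge0[OF assms(1)]
    unfolding r_def by (auto simp: complex_eq_iff)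
  then have r0: "r > 0" using assms by auto
  have sq: "sqrt r * sqrt r = r" using r by simp
  have "1 / sqrt r * (1 / sqrt r) * r = 1" using r0 sq by (simp add: field_simps)
  then have "complex_of_real (1 / sqrt r * (1 / sqrt r)) * complex_of_real r = 1"
    by (metis of_real_1 of_real_mult)
  then show ?thesis using nrm_cip[OF assms(1) assms(1)] r unfolding r_def[symmetric] by simp
qed

lemma nrm_unit: assumes "x \<in> carrier_vec n" "x \<bullet>c x = 1" shows "nrm x = x"
  unfolding nrm_def using assms by simp

lemma assoc_sq: "A \<in> carrier_mat n n \<Longrightarrow> B \<in> carrier_mat n n \<Longrightarrow> C \<in> carrier_mat n n \<Longrightarrow> A * B * C = A * (B * C)"
  by (rule assoc_mult_mat)

lemma mult_sq_carrier: "A \<in> carrier_mat n n \<Longrightarrow> B \<in> carrier_mat n n \<Longrightarrow> A * B \<in> carrier_mat n n"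
  by auto

lemma spectral:
  fixes A :: "complex mat"
  assumes "A \<in> carrier_mat n n" "adj A = A"
  shows "\<exists>U D. unitary n U \<and> D \<in> carrier_mat n n \<and> diagonal_mat D \<and> (\<forall>i<n. Im (D $$ (i,i)) = 0)
            \<and> A = U * D * adj U"
  using assms
proof (induction n arbitrary: A)
  case 0
  then show ?case
    by (intro exI[of _ "1\<^sub>m 0"] exI[of _ A]) (auto simp: unitary_def diagonal_mat_def)
next
  case (Suc m A)
  define n where "n = Suc m"
  have A: "A \<in> carrier_mat n n" and hA: "adj A = A" using Suc n_def by auto
  obtain e where "e \<in> spectrum A" using spectrum_non_empty[OF A] n_def by auto
  then obtain v where "eigenvector A v e" unfolding spectrum_def eigenvalue_def by auto
  then have v: "v \<in> carrier_vec n" and v0: "v \<noteq> 0\<^sub>v n" and Av: "A *\<^sub>v v = e \<cdot>\<^sub>v v"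
    unfolding eigenvector_def using A by auto
  have vv: "v \<bullet>c v \<noteq> 0" using cip_self_0[OF v] v0 by auto
  define u where "u = nrm v"
  have u: "u \<in> carrier_vec n" and uu: "u \<bullet>c u = 1" using v vv nrm_self[OF v vv] by (auto simp: u_def)
  have u0: "u \<noteq> 0\<^sub>v n" using uu u by auto
  have Au: "A *\<^sub>v u = e \<cdot>\<^sub>v u"
    unfolding u_def nrm_def mult_mat_vec[OF A v] Av smult_smult_assoc by (simp add: mult.commute)
  interpret cof_vec_space n "TYPE(complex)" .
  define b where "b = basis_completion u"
  have bc: "set b \<subseteq> carrier_vec n" "distinct b" "\<not> lin_dep (set b)" "length b = n" "hd b = u"
    using basis_completion[OF u u0] unfolding b_def by auto
  define ws where "ws = gram_schmidt n b"
  have wsr: "corthogonal ws" "set ws \<subseteq> carrier_vec n" "length ws = n"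
    using gram_schmidt_result[OF bc(1) bc(2) bc(3) ws_def] bc(4) by auto
  from bc(4,5) n_def obtain bs where bs: "b = u # bs" by (cases b) auto
  have hws: "hd ws = u" unfolding ws_def bs using u by simp
  define ws' where "ws' = map nrm ws"
  have ws'c: "ws' ! i \<in> carrier_vec n" if "i < n" for i
    using wsr that unfolding ws'_def by (auto simp: set_conv_nth)
  have ws'o: "ws' ! j \<bullet>c ws' ! i = (if i = j then 1 else 0)" if "i < n" "j < n" for i j
  proof -
    have c: "ws ! i \<in> carrier_vec n" "ws ! j \<in> carrier_vec n" using wsr that by (auto simp: set_conv_nth)
    show ?thesis
    proof (cases "i = j")
      case True
      then have "ws ! i \<bullet>c ws ! i \<noteq> 0" using wsr that unfolding corthogonal_def by auto
      then show ?thesis using True nrm_self[OF c(1)] that wsr unfolding ws'_def by simp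
    next
      case False
      then have "ws ! j \<bullet>c ws ! i = 0" using wsr that unfolding corthogonal_def by auto
      then show ?thesis using False nrm_cip[OF c(2) c(1)] that wsr unfolding ws'_def by simp
    qed
  qed
  have hws': "ws' ! 0 = u"
    using hws wsr n_def nrm_unit[OF u uu] unfolding ws'_def by (cases ws) auto
  define W where "W = mat_of_cols n ws'"
  have W: "W \<in> carrier_mat n n" unfolding W_def ws'_def using wsr by auto
  have Widx: "W $$ (k, j) = ws' ! j $ k" if "k < n" "j < n" for k j
    unfolding W_def using that wsr by (simp add: mat_of_cols_index ws'_def)
  have WW: "adj W * W = 1\<^sub>m n"
  proof (rule eq_matI)
    fix i j assume "i < dim_row (1\<^sub>m n)" "j < dim_col (1\<^sub>m n)"
    then have ij: "i < n" "j < n" by auto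
    have "(adj W * W) $$ (i,j) = (\<Sum>k<n. adj W $$ (i,k) * W $$ (k,j))"
      using mult_idx[OF adj_carrier[OF W] W ij] .
    also have "\<dots> = (\<Sum>k<n. ws' ! j $ k * cnj (ws' ! i $ k))"
      using ij W by (intro sum.cong refl) (simp add: Widx mult.commute)
    also have "\<dots> = ws' ! j \<bullet>c ws' ! i" using ws'c ij by (simp add: cip_sum[of _ n])
    also have "\<dots> = 1\<^sub>m n $$ (i,j)" using ws'o[OF ij] ij by simp
    finally show "(adj W * W) $$ (i,j) = 1\<^sub>m n $$ (i,j)" .
  qed (use W in auto)
  have uW: "unitary n W" using unitaryI[OF W WW] .
  then have WW': "W * adj W = 1\<^sub>m n" unfolding unitary_def by auto
  have colW: "col W 0 = u"
  proof -
    have "col W 0 = ws' ! 0" unfolding W_def using ws'c[of 0] wsr n_def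
      by (intro col_mat_of_cols) (auto simp: ws'_def)
    then show ?thesis using hws' by simp
  qed
  define A' where "A' = adj W * A * W"
  have A': "A' \<in> carrier_mat n n" unfolding A'_def using A W by auto
  have hA': "adj A' = A'"
  proof -
    have "adj A' = adj W * adj (adj W * A)" unfolding A'_def using A W by (intro adj_mult[of _ n n]) auto
    also have "adj (adj W * A) = adj A * W" using A W by (subst adj_mult[of _ n n _ n]) auto
    finally show ?thesis unfolding A'_def hA using A W by (simp add: assoc_sq[of _ n])
  qed
  have colA': "col A' 0 = e \<cdot>\<^sub>v unit_vec n 0"
  proof -
    have "col A' 0 = col (adj W * (A * W)) 0"
      unfolding A'_def using A W by (simp add: assoc_sq[of _ n])
    also have "\<dots> = adj W *\<^sub>v col (A * W) 0"
      using A W n_def by (intro col_mult2[of _ n n _ n]) auto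
    also have "col (A * W) 0 = A *\<^sub>v u" using A W n_def colW by (subst col_mult2[of _ n n _ n]) auto
    also have "adj W *\<^sub>v (A *\<^sub>v u) = e \<cdot>\<^sub>v (adj W *\<^sub>v col W 0)"
      using Au colW u W by (simp add: mult_mat_vec[of _ n n])
    also have "adj W *\<^sub>v col W 0 = col (adj W * W) 0" using W n_def by (subst col_mult2[of _ n n _ n]) auto
    also have "\<dots> = unit_vec n 0" using WW n_def by simp
    finally show ?thesis .
  qed
  have A'0: "A' $$ (i, 0) = (if i = 0 then e else 0)" if "i < n" for i
    using arg_cong[OF colA', of "\<lambda>x. x $ i"] that A' n_def by auto
  have A'0': "A' $$ (0, j) = (if j = 0 then e else 0)" if "j < n" for j
  proof -
    have "A' $$ (0, j) = adj A' $$ (0, j)" using hA' by simp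
    also have "\<dots> = cnj (A' $$ (j, 0))" using A' that n_def by simp
    finally show ?thesis using A'0[OF that] that by (auto simp: complex_eq_iff)
  qed
  have e_real: "Im e = 0"
  proof -
    have "A' $$ (0,0) = adj A' $$ (0,0)" using hA' by simp
    also have "\<dots> = cnj (A' $$ (0,0))" using A' n_def by simp
    finally show ?thesis using A'0[of 0] n_def by (simp add: complex_eq_iff)
  qed
  define A3 where "A3 = mat m m (\<lambda>(i,j). A' $$ (Suc i, Suc j))"
  have A3: "A3 \<in> carrier_mat m m" unfolding A3_def by auto
  have hA3: "adj A3 = A3"
  proof (rule eq_matI)
    fix i j assume "i < dim_row A3" "j < dim_col A3"
    then have ij: "i < m" "j < m" using A3 by auto
    have "A' $$ (Suc i, Suc j) = adj A' $$ (Suc i, Suc j)" using hA' by simp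
    then show "adj A3 $$ (i, j) = A3 $$ (i, j)" using ij A' n_def unfolding A3_def by simp
  qed (use A3 in auto)
  obtain U3 D3 where U3: "unitary m U3" and D3: "D3 \<in> carrier_mat m m" "diagonal_mat D3"
    "\<forall>i<m. Im (D3 $$ (i,i)) = 0" and A3eq: "A3 = U3 * D3 * adj U3"
    using Suc.IH[OF A3 hA3] by blast
  have U3c: "U3 \<in> carrier_mat m m" using U3 unfolding unitary_def by auto
  define E where "E = (mat 1 1 (\<lambda>_. e) :: complex mat)"
  have E: "E \<in> carrier_mat 1 1" unfolding E_def by auto
  define V where "V = four_block_mat (1\<^sub>m 1) (0\<^sub>m 1 m) (0\<^sub>m m 1) U3"
  define D where "D = four_block_mat E (0\<^sub>m 1 m) (0\<^sub>m m 1) D3"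
  have V: "V \<in> carrier_mat n n" unfolding V_def n_def using U3c by auto
  have D: "D \<in> carrier_mat n n" unfolding D_def n_def using D3 E by auto
  have adjV: "adj V = four_block_mat (1\<^sub>m 1) (0\<^sub>m 1 m) (0\<^sub>m m 1) (adj U3)"
    unfolding V_def by (rule eq_matI) (use U3c in auto)
  have "adj V * V = four_block_mat (1\<^sub>m 1) (0\<^sub>m 1 m) (0\<^sub>m m 1) (adj U3 * U3)"
    unfolding adjV unfolding V_def
    by (subst mult_four_block_mat[of _ 1 1 _ m _ m _ _ 1 _ m]) (use U3c in auto)
  also have "\<dots> = 1\<^sub>m n" using U3 unfolding unitary_def n_def by simp
  finally have uV: "unitary n V" using unitaryI[OF V] by blast
  have A'eq: "A' = V * D * adj V"
  proof -
    have "V * D = four_block_mat E (0\<^sub>m 1 m) (0\<^sub>m m 1) (U3 * D3)"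
      unfolding V_def D_def
      by (subst mult_four_block_mat[of _ 1 1 _ m _ m _ _ 1 _ m]) (use U3c D3 E in auto)
    then have "V * D * adj V = four_block_mat E (0\<^sub>m 1 m) (0\<^sub>m m 1) (U3 * D3 * adj U3)"
      unfolding adjV
      by (simp, subst mult_four_block_mat[of _ 1 1 _ m _ m _ _ 1 _ m]) (use U3c D3 E in auto)
    also have "\<dots> = A'"
    proof (rule eq_matI)
      fix i j assume "i < dim_row A'" "j < dim_col A'"
      then have ij: "i < Suc m" "j < Suc m" using A' n_def by auto
      show "four_block_mat E (0\<^sub>m 1 m) (0\<^sub>m m 1) (U3 * D3 * adj U3) $$ (i, j) = A' $$ (i, j)"
      proof (cases "i = 0 \<or> j = 0")
        case True
        then show ?thesis using ij A'0 A'0' U3c D3 E n_def unfolding E_def by auto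
      next
        case False
        then obtain i' j' where "i = Suc i'" "j = Suc j'" by (cases i; cases j) auto
        then show ?thesis using ij U3c D3 E A3eq[symmetric] unfolding A3_def by auto
      qed
    qed (use A' n_def U3c D3 E in auto)
    finally show ?thesis by simp
  qed
  have "A = W * A' * adj W"
  proof -
    have "W * A' * adj W = (W * adj W) * A * (W * adj W)"
      unfolding A'_def using A W by (simp add: assoc_sq[of _ n] mult_sq_carrier)
    then show ?thesis using WW' A by simp
  qed
  also have "\<dots> = (W * V) * D * adj (W * V)"
    unfolding A'eq using W V D by (simp add: adj_mult[OF W V] assoc_sq[of _ n] mult_sq_carrier)
  finally have Aeq: "A = (W * V) * D * adj (W * V)" .
  have dD: "diagonal_mat D" using D3 E unfolding D_def diagonal_mat_def E_def
    by (auto simp: diagonal_mat_def)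
  have rD: "\<forall>i<n. Im (D $$ (i,i)) = 0" using D3 E e_real unfolding D_def E_def n_def
    by (auto simp: less_Suc_eq_0_disj)
  show ?case using unitary_mult[OF uW uV] D dD rD Aeq unfolding n_def by blast
qed

lemma psd_diag: assumes "psd n A" "i < n" shows "Im (A $$ (i,i)) = 0 \<and> Re (A $$ (i,i)) \<ge> 0"
proof -
  have A: "A \<in> carrier_mat n n" using assms psd_carrier by auto
  let ?v = "vec n (\<lambda>k. of_bool (k = i) + 0 * of_bool (k = i))"
  have "?v \<in> carrier_vec n" by simp
  then have q: "Im (\<Sum>a<n. \<Sum>b<n. cnj (?v $ a) * A $$ (a,b) * ?v $ b) = 0 \<and>
     Re (\<Sum>a<n. \<Sum>b<n. cnj (?v $ a) * A $$ (a,b) * ?v $ b) \<ge> 0"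
    using assms(1) unfolding psd_def Let_def by blast
  from q[unfolded qf_two[OF A assms(2) assms(2), of 0]] show ?thesis by simp
qed

definition dmat :: "nat \<Rightarrow> (nat \<Rightarrow> complex) \<Rightarrow> complex mat" where
  "dmat n f = mat n n (\<lambda>(i,j). if i = j then f i else 0)"

lemma dmat_carrier[simp]: "dmat n f \<in> carrier_mat n n"
  by (simp add: dmat_def)

lemma dmat_idx[simp]: "i < n \<Longrightarrow> j < n \<Longrightarrow> dmat n f $$ (i,j) = (if i = j then f i else 0)"
  by (simp add: dmat_def)

lemma dmat_dims[simp]: "dim_row (dmat n f) = n" "dim_col (dmat n f) = n"
  by (auto simp: dmat_def)

lemma diag_dmat: assumes "D \<in> carrier_mat n n" "diagonal_mat D" shows "D = dmat n (\<lambda>i. D $$ (i,i))"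
  by (rule eq_matI) (use assms in \<open>auto simp: diagonal_mat_def\<close>)

lemma dmat_mult: "dmat n f * dmat n g = dmat n (\<lambda>i. f i * g i)"
proof (rule eq_matI)
  fix i j assume "i < dim_row (dmat n (\<lambda>i. f i * g i))" "j < dim_col (dmat n (\<lambda>i. f i * g i))"
  then have ij: "i < n" "j < n" by auto
  have "(dmat n f * dmat n g) $$ (i,j) = (\<Sum>k<n. dmat n f $$ (i,k) * dmat n g $$ (k,j))"
    using mult_idx[OF dmat_carrier dmat_carrier ij] .
  also have "\<dots> = (\<Sum>k<n. if k = i then (if i = j then f i * g i else 0) else 0)"
    using ij by (intro sum.cong refl) auto
  also have "\<dots> = dmat n (\<lambda>i. f i * g i) $$ (i,j)" using ij by (subst sum.delta) auto
  finally show "(dmat n f * dmat n g) $$ (i,j) = dmat n (\<lambda>i. f i * g i) $$ (i,j)" .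
qed auto

lemma adj_dmat: "adj (dmat n f) = dmat n (\<lambda>i. cnj (f i))"
  by (rule eq_matI) auto

lemma dmat_zero: "dmat n (\<lambda>_. 0) = 0\<^sub>m n n"
  by (rule eq_matI) auto

lemma psd_dmat: assumes "\<And>i. i < n \<Longrightarrow> Im (f i) = 0 \<and> Re (f i) \<ge> 0" shows "psd n (dmat n f)"
  unfolding psd_def Let_def
proof (intro conjI ballI)
  fix v :: "complex vec" assume v: "v \<in> carrier_vec n"
  have "(\<Sum>i<n. \<Sum>j<n. cnj (v $ i) * dmat n f $$ (i,j) * v $ j) =
        (\<Sum>i<n. \<Sum>j<n. if j = i then cnj (v $ i) * f i * v $ i else 0)"
    by (intro sum.cong refl) auto
  also have "\<dots> = (\<Sum>i<n. cnj (v $ i) * f i * v $ i)" by (intro sum.cong refl) (subst sum.delta, auto)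
  also have "\<dots> = (\<Sum>i<n. complex_of_real (Re (f i) * (cmod (v $ i))\<^sup>2))"
  proof (intro sum.cong refl)
    fix i assume "i \<in> {..<n}"
    then have fi: "f i = complex_of_real (Re (f i))" using assms by (simp add: complex_eq_iff)
    have "cnj (v $ i) * v $ i = complex_of_real ((cmod (v $ i))\<^sup>2)"
      by (simp add: complex_mult_cnj cmod_power2 mult.commute)
    then show "cnj (v $ i) * f i * v $ i = complex_of_real (Re (f i) * (cmod (v $ i))\<^sup>2)"
      by (subst fi) (simp add: mult_ac)
  qed
  finally have eq: "(\<Sum>i<n. \<Sum>j<n. cnj (v $ i) * dmat n f $$ (i,j) * v $ j) =
     complex_of_real (\<Sum>i<n. Re (f i) * (cmod (v $ i))\<^sup>2)" by simp
  show "Im (\<Sum>i<n. \<Sum>j<n. cnj (v $ i) * dmat n f $$ (i,j) * v $ j) = 0" unfolding eq by simp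
  show "Re (\<Sum>i<n. \<Sum>j<n. cnj (v $ i) * dmat n f $$ (i,j) * v $ j) \<ge> 0" unfolding eq
    using assms by (auto intro!: sum_nonneg mult_nonneg_nonneg)
qed auto

lemma psd_spectral:
  assumes "psd n A"
  shows "\<exists>U d. unitary n U \<and> (\<forall>i<n. d i \<ge> 0) \<and> A = U * dmat n (\<lambda>i. complex_of_real (d i)) * adj U"
proof -
  have A: "A \<in> carrier_mat n n" using assms psd_carrier by auto
  obtain U D where U: "unitary n U" and D: "D \<in> carrier_mat n n" "diagonal_mat D"
    and Dr: "\<forall>i<n. Im (D $$ (i,i)) = 0" and AD: "A = U * D * adj U"
    using spectral[OF A psd_herm[OF assms]] by blast
  have Uc: "U \<in> carrier_mat n n" and UU: "adj U * U = 1\<^sub>m n" using U unfolding unitary_def by auto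
  have "adj U * A * U = (adj U * U) * D * (adj U * U)"
    unfolding AD using Uc D by (simp add: assoc_sq[of _ n] mult_sq_carrier)
  then have DA: "D = adj U * A * U" using UU D by simp
  have psdD: "psd n D" unfolding DA using psd_congr[OF assms Uc] .
  define d where "d i = Re (D $$ (i,i))" for i
  have "D = dmat n (\<lambda>i. D $$ (i,i))" using diag_dmat[OF D] .
  also have "\<dots> = dmat n (\<lambda>i. complex_of_real (d i))"
    unfolding dmat_def d_def using Dr by (intro cong_mat refl) (auto simp: complex_eq_iff)
  finally have "A = U * dmat n (\<lambda>i. complex_of_real (d i)) * adj U" using AD by simp
  moreover have "\<forall>i<n. d i \<ge> 0" using psd_diag[OF psdD] unfolding d_def by auto
  ultimately show ?thesis using U by blast
qed

lemma sqrt_exists: assumes "psd n A" shows "\<exists>B. psd n B \<and> B * B = A"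
proof -
  obtain U d where U: "unitary n U" and d: "\<forall>i<n. d i \<ge> 0"
    and AD: "A = U * dmat n (\<lambda>i. complex_of_real (d i)) * adj U"
    using psd_spectral[OF assms] by blast
  have Uc: "U \<in> carrier_mat n n" and UU: "adj U * U = 1\<^sub>m n" using U unfolding unitary_def by auto
  define S where "S = dmat n (\<lambda>i. complex_of_real (sqrt (d i)))"
  have S: "S \<in> carrier_mat n n" unfolding S_def by simp
  have psdS: "psd n S" unfolding S_def by (rule psd_dmat) (use d in auto)
  define B where "B = U * S * adj U"
  have "psd n (adj (adj U) * S * adj U)" using psd_congr[OF psdS adj_carrier[OF Uc]] .
  then have psdB: "psd n B" unfolding B_def by simp
  have SS: "S * S = dmat n (\<lambda>i. complex_of_real (d i))"
    unfolding S_def dmat_mult by (rule eq_matI) (use d in \<open>auto simp flip: of_real_mult\<close>)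
  have "B * B = U * S * (adj U * U) * S * adj U"
    unfolding B_def using Uc S by (simp add: assoc_sq[of _ n] mult_sq_carrier)
  also have "\<dots> = U * (S * S) * adj U" using UU Uc S by (simp add: assoc_sq[of _ n] mult_sq_carrier)
  also have "\<dots> = A" unfolding SS AD ..
  finally show ?thesis using psdB by blast
qed

lemma mat_vec_zero: "R \<in> carrier_mat n n \<Longrightarrow> R *\<^sub>v 0\<^sub>v n = (0\<^sub>v n :: complex vec)"
  by (intro eq_vecI) (auto simp: scalar_prod_def)

lemma psd_form_zero: assumes "psd n B" "v \<in> carrier_vec n" "(B *\<^sub>v v) \<bullet>c v = 0"
  shows "B *\<^sub>v v = 0\<^sub>v n"
proof -
  obtain R where R: "psd n R" "R * R = B" using sqrt_exists[OF assms(1)] by blast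
  have Rc: "R \<in> carrier_mat n n" using R psd_carrier by auto
  have hR: "adj R = R" using psd_herm[OF R(1)] .
  have "(B *\<^sub>v v) \<bullet>c v = (R *\<^sub>v (R *\<^sub>v v)) \<bullet>c v"
    unfolding R(2)[symmetric] using Rc assms by (simp add: assoc_mult_mat_vec[of _ n n _ n])
  also have "\<dots> = (adj R *\<^sub>v (R *\<^sub>v v)) \<bullet>c v" using hR by simp
  also have "\<dots> = (R *\<^sub>v v) \<bullet>c (R *\<^sub>v v)" using adj_cip[OF Rc _ assms(2)] Rc assms(2) by simp
  finally have "R *\<^sub>v v = 0\<^sub>v n" using cip_self_0[of "R *\<^sub>v v" n] assms Rc by simp
  then have "R *\<^sub>v (R *\<^sub>v v) = 0\<^sub>v n" using Rc mat_vec_zero by simp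
  then show ?thesis unfolding R(2)[symmetric] using Rc assms by (simp add: assoc_mult_mat_vec[of _ n n _ n])
qed

lemma col_mult_dmat: assumes U: "U \<in> carrier_mat n n" and i: "i < n"
  shows "col (U * dmat n f) i = f i \<cdot>\<^sub>v col U i"
proof (rule eq_vecI)
  fix k assume "k < dim_vec (f i \<cdot>\<^sub>v col U i)"
  then have k: "k < n" using U by auto
  have "col (U * dmat n f) i $ k = (U * dmat n f) $$ (k,i)" using U k i by simp
  also have "\<dots> = (\<Sum>j<n. U $$ (k,j) * dmat n f $$ (j,i))" using mult_idx[OF U dmat_carrier k i] .
  also have "\<dots> = (\<Sum>j<n. if j = i then U $$ (k,i) * f i else 0)" using i by (intro sum.cong refl) auto
  also have "\<dots> = U $$ (k,i) * f i" using i by (subst sum.delta) auto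
  finally show "col (U * dmat n f) i $ k = (f i \<cdot>\<^sub>v col U i) $ k" using U k i by simp
qed (use U in auto)

lemma herm_spectral:
  fixes X :: "complex mat"
  assumes "X \<in> carrier_mat n n" "adj X = X"
  shows "\<exists>U d. unitary n U \<and> X = U * dmat n (\<lambda>i. complex_of_real (d i)) * adj U"
proof -
  obtain U D where U: "unitary n U" and D: "D \<in> carrier_mat n n" "diagonal_mat D"
    and Dr: "\<forall>i<n. Im (D $$ (i,i)) = 0" and AD: "X = U * D * adj U"
    using spectral[OF assms] by blast
  define d where "d i = Re (D $$ (i,i))" for i
  have "D = dmat n (\<lambda>i. D $$ (i,i))" using diag_dmat[OF D] .
  also have "\<dots> = dmat n (\<lambda>i. complex_of_real (d i))"
    unfolding d_def by (rule eq_matI) (use Dr in \<open>auto simp: complex_eq_iff\<close>)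
  finally show ?thesis using AD U by blast
qed

lemma unitary_col: assumes "unitary n U" "i < n"
  shows "col U i \<in> carrier_vec n" "col U i \<bullet>c col U i = 1"
proof -
  have Uc: "U \<in> carrier_mat n n" and UU: "adj U * U = 1\<^sub>m n" using assms unfolding unitary_def by auto
  show c: "col U i \<in> carrier_vec n" using Uc by auto
  have "col U i \<bullet>c col U i = (\<Sum>k<n. U $$ (k,i) * cnj (U $$ (k,i)))"
    using c Uc assms(2) by (simp add: cip_sum[of _ n])
  also have "\<dots> = (\<Sum>k<n. adj U $$ (i,k) * U $$ (k,i))"
    using Uc assms(2) by (intro sum.cong refl) (simp add: mult.commute)
  also have "\<dots> = (adj U * U) $$ (i,i)" using mult_idx[OF adj_carrier[OF Uc] Uc assms(2) assms(2)] by simp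
  also have "\<dots> = 1" using UU assms(2) by simp
  finally show "col U i \<bullet>c col U i = 1" .
qed

lemma sqrt_unique:
  assumes p1: "psd n B1" and p2: "psd n B2" and eq: "B1 * B1 = B2 * B2"
  shows "B1 = B2"
proof -
  have B1: "B1 \<in> carrier_mat n n" and B2: "B2 \<in> carrier_mat n n" using p1 p2 psd_carrier by auto
  have h1: "adj B1 = B1" and h2: "adj B2 = B2" using psd_herm p1 p2 by auto
  define X where "X = B1 - B2"
  have X: "X \<in> carrier_mat n n" unfolding X_def using B1 B2 by auto
  have hX: "adj X = X" unfolding X_def using adj_minus[OF B1 B2] h1 h2 by simp
  obtain U d where U: "unitary n U" and XU: "X = U * dmat n (\<lambda>i. complex_of_real (d i)) * adj U"
    using herm_spectral[OF X hX] by blast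
  have Uc: "U \<in> carrier_mat n n" and UU: "adj U * U = 1\<^sub>m n" using U unfolding unitary_def by auto
  have Y: "B1 * X + X * B2 = 0\<^sub>m n n"
  proof (rule eq_matI)
    fix i j assume "i < dim_row (0\<^sub>m n n :: complex mat)" "j < dim_col (0\<^sub>m n n :: complex mat)"
    then have ij: "i < n" "j < n" by auto
    have "(B1 * X + X * B2) $$ (i,j) = (\<Sum>k<n. B1 $$ (i,k) * X $$ (k,j)) + (\<Sum>k<n. X $$ (i,k) * B2 $$ (k,j))"
      using mult_idx[OF B1 X ij] mult_idx[OF X B2 ij] B1 X B2 ij by simp
    also have "\<dots> = (\<Sum>k<n. B1 $$ (i,k) * B1 $$ (k,j)) - (\<Sum>k<n. B2 $$ (i,k) * B2 $$ (k,j))"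
      unfolding X_def using B1 B2 ij by (simp add: algebra_simps sum_subtractf sum.distrib)
    also have "\<dots> = (B1 * B1) $$ (i,j) - (B2 * B2) $$ (i,j)"
      using mult_idx[OF B1 B1 ij] mult_idx[OF B2 B2 ij] by simp
    also have "\<dots> = 0" using eq by simp
    finally show "(B1 * X + X * B2) $$ (i,j) = 0\<^sub>m n n $$ (i,j)" using ij by simp
  qed (use X B2 in auto)
  have d0: "d i = 0" if i: "i < n" for i
  proof (rule ccontr)
    assume nz: "d i \<noteq> 0"
    define v where "v = col U i"
    define l where "l = complex_of_real (d i)"
    have v: "v \<in> carrier_vec n" and vv: "v \<bullet>c v = 1" using unitary_col[OF U i] unfolding v_def by auto
    have "X * U = U * dmat n (\<lambda>i. complex_of_real (d i)) * (adj U * U)"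
      unfolding XU using Uc by (simp add: assoc_sq[of _ n] mult_sq_carrier)
    then have XU2: "X * U = U * dmat n (\<lambda>i. complex_of_real (d i))" using UU Uc by simp
    have Xv: "X *\<^sub>v v = l \<cdot>\<^sub>v v"
    proof -
      have "X *\<^sub>v v = col (X * U) i" unfolding v_def using X Uc i by (subst col_mult2[of _ n n _ n]) auto
      also have "\<dots> = l \<cdot>\<^sub>v v" unfolding XU2 v_def l_def using col_mult_dmat[OF Uc i] .
      finally show ?thesis .
    qed
    have "(B1 * X + X * B2) *\<^sub>v v = B1 *\<^sub>v (X *\<^sub>v v) + X *\<^sub>v (B2 *\<^sub>v v)"
      using B1 B2 X v by (simp add: add_mult_distrib_mat_vec[of _ n n] assoc_mult_mat_vec[of _ n n _ n])
    also have "\<dots> = l \<cdot>\<^sub>v (B1 *\<^sub>v v) + X *\<^sub>v (B2 *\<^sub>v v)" unfolding Xv using mult_mat_vec[OF B1 v] by simp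
    finally have e1: "(B1 * X + X * B2) *\<^sub>v v = l \<cdot>\<^sub>v (B1 *\<^sub>v v) + X *\<^sub>v (B2 *\<^sub>v v)" .
    have "((B1 * X + X * B2) *\<^sub>v v) \<bullet>c v = 0" unfolding Y using v by (simp add: scalar_prod_def)
    then have "(l \<cdot>\<^sub>v (B1 *\<^sub>v v) + X *\<^sub>v (B2 *\<^sub>v v)) \<bullet>c v = 0" unfolding e1 .
    then have "(l \<cdot>\<^sub>v (B1 *\<^sub>v v)) \<bullet>c v + (X *\<^sub>v (B2 *\<^sub>v v)) \<bullet>c v = 0"
      using B1 B2 X v by (simp add: add_scalar_prod_distrib[of _ n])
    moreover have "(l \<cdot>\<^sub>v (B1 *\<^sub>v v)) \<bullet>c v = l * ((B1 *\<^sub>v v) \<bullet>c v)" using B1 v by simp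
    moreover have "(X *\<^sub>v (B2 *\<^sub>v v)) \<bullet>c v = l * ((B2 *\<^sub>v v) \<bullet>c v)"
    proof -
      have "(X *\<^sub>v (B2 *\<^sub>v v)) \<bullet>c v = (adj X *\<^sub>v (B2 *\<^sub>v v)) \<bullet>c v" using hX by simp
      also have "\<dots> = (B2 *\<^sub>v v) \<bullet>c (X *\<^sub>v v)" using adj_cip[OF X _ v] B2 v by simp
      also have "\<dots> = (1 \<cdot>\<^sub>v (B2 *\<^sub>v v)) \<bullet>c (l \<cdot>\<^sub>v v)" unfolding Xv by simp
      also have "\<dots> = cnj l * ((B2 *\<^sub>v v) \<bullet>c v)" using cip_smult[of "B2 *\<^sub>v v" n v 1 l] B2 v by simp
      also have "cnj l = l" unfolding l_def by simp
      finally show ?thesis .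
    qed
    ultimately have "l * ((B1 *\<^sub>v v) \<bullet>c v + (B2 *\<^sub>v v) \<bullet>c v) = 0" by (simp add: algebra_simps)
    then have s0: "(B1 *\<^sub>v v) \<bullet>c v + (B2 *\<^sub>v v) \<bullet>c v = 0" using nz unfolding l_def by simp
    have q1: "Im ((B1 *\<^sub>v v) \<bullet>c v) = 0 \<and> Re ((B1 *\<^sub>v v) \<bullet>c v) \<ge> 0" using psdD[OF p1 v] .
    have q2: "Im ((B2 *\<^sub>v v) \<bullet>c v) = 0 \<and> Re ((B2 *\<^sub>v v) \<bullet>c v) \<ge> 0" using psdD[OF p2 v] .
    have "(B1 *\<^sub>v v) \<bullet>c v = 0" "(B2 *\<^sub>v v) \<bullet>c v = 0" using s0 q1 q2 by (auto simp: complex_eq_iff)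
    then have "B1 *\<^sub>v v = 0\<^sub>v n" "B2 *\<^sub>v v = 0\<^sub>v n" using psd_form_zero[OF p1 v] psd_form_zero[OF p2 v] by auto
    then have "X *\<^sub>v v = 0\<^sub>v n" unfolding X_def using B1 B2 v by (simp add: minus_mult_distrib_mat_vec[of _ n n])
    then have "l \<cdot>\<^sub>v v = 0\<^sub>v n" using Xv by simp
    then have "(l \<cdot>\<^sub>v v) \<bullet>c v = 0" using v by (simp add: scalar_prod_def)
    then have "l = 0" using vv v by simp
    then show False using nz unfolding l_def by simp
  qed
  have "dmat n (\<lambda>i. complex_of_real (d i)) = 0\<^sub>m n n" by (rule eq_matI) (auto simp: d0)
  then have "X = 0\<^sub>m n n" unfolding XU using Uc by simp
  show ?thesis
  proof (rule eq_matI)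
    fix i j assume "i < dim_row B2" "j < dim_col B2"
    then have ij: "i < n" "j < n" using B2 by auto
    have "X $$ (i,j) = 0" using \<open>X = 0\<^sub>m n n\<close> ij by simp
    then show "B1 $$ (i,j) = B2 $$ (i,j)" unfolding X_def using B1 B2 ij by simp
  qed (use B1 B2 in auto)
qed

lemma msqrt: assumes "psd n A" shows "psd n (msqrt A)" "msqrt A * msqrt A = A"
proof -
  have d: "dim_row A = n" using psd_carrier[OF assms] by auto
  have ex1: "\<exists>!B. psd (dim_row A) B \<and> B * B = A"
    unfolding d using sqrt_exists[OF assms] sqrt_unique by blast
  have "psd (dim_row A) (msqrt A) \<and> msqrt A * msqrt A = A"
    unfolding msqrt_def by (rule theI'[OF ex1])
  then show "psd n (msqrt A)" "msqrt A * msqrt A = A" using d by auto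
qed

lemma msqrt_eq: assumes "psd n A" "psd n B" "B * B = A" shows "msqrt A = B"
  using sqrt_unique[OF msqrt(1)[OF assms(1)] assms(2)] msqrt(2)[OF assms(1)] assms(3) by simp

lemma msqrt_carrier: "psd n A \<Longrightarrow> msqrt A \<in> carrier_mat n n"
  using msqrt(1) psd_carrier by blast

lemma msqrt_herm: "psd n A \<Longrightarrow> adj (msqrt A) = msqrt A"
  using msqrt(1) psd_herm by blast

lemma tr_dmat: "tr (dmat n f) = (\<Sum>i<n. f i)"
  by (simp add: tr_def)

lemma tr_unitary_conj: assumes "unitary n U" "S \<in> carrier_mat n n"
  shows "tr (U * S * adj U) = tr S"
proof -
  have Uc: "U \<in> carrier_mat n n" and UU: "adj U * U = 1\<^sub>m n" using assms unfolding unitary_def by auto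
  have "tr ((U * S) * adj U) = tr (adj U * (U * S))" using Uc assms(2) by (intro tr_comm) auto
  also have "adj U * (U * S) = (adj U * U) * S" using Uc assms(2) by (simp add: assoc_sq[of _ n])
  finally show ?thesis using UU assms(2) by simp
qed

lemma msqrt_spec: assumes U: "unitary n U" and d: "\<forall>i<n. d i \<ge> 0"
  shows "msqrt (U * dmat n (\<lambda>i. complex_of_real (d i)) * adj U) = U * dmat n (\<lambda>i. complex_of_real (sqrt (d i))) * adj U"
proof -
  have Uc: "U \<in> carrier_mat n n" and UU: "adj U * U = 1\<^sub>m n" using U unfolding unitary_def by auto
  define S where "S = dmat n (\<lambda>i. complex_of_real (sqrt (d i)))"
  have S: "S \<in> carrier_mat n n" unfolding S_def by simp
  have psdS: "psd n S" unfolding S_def by (rule psd_dmat) (use d in auto)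
  define B where "B = U * S * adj U"
  have "psd n (adj (adj U) * S * adj U)" using psd_congr[OF psdS adj_carrier[OF Uc]] .
  then have psdB: "psd n B" unfolding B_def by simp
  have SS: "S * S = dmat n (\<lambda>i. complex_of_real (d i))"
    unfolding S_def dmat_mult by (rule eq_matI) (use d in \<open>auto simp flip: of_real_mult\<close>)
  have "B * B = U * S * (adj U * U) * S * adj U"
    unfolding B_def using Uc S by (simp add: assoc_sq[of _ n] mult_sq_carrier)
  also have "\<dots> = U * (S * S) * adj U" using UU Uc S by (simp add: assoc_sq[of _ n] mult_sq_carrier)
  finally have BB: "B * B = U * dmat n (\<lambda>i. complex_of_real (d i)) * adj U" unfolding SS .
  have "psd n (adj (adj U) * dmat n (\<lambda>i. complex_of_real (d i)) * adj U)"
    using psd_congr[OF psd_dmat adj_carrier[OF Uc]] d by auto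
  then have "psd n (U * dmat n (\<lambda>i. complex_of_real (d i)) * adj U)" by simp
  from msqrt_eq[OF this psdB BB] show ?thesis unfolding B_def S_def .
qed

lemma psd_tr: assumes "psd n A" shows "Im (tr A) = 0 \<and> Re (tr A) \<ge> 0"
proof -
  have A: "A \<in> carrier_mat n n" using assms psd_carrier by auto
  have "Im (tr A) = (\<Sum>i<n. Im (A $$ (i,i)))" "Re (tr A) = (\<Sum>i<n. Re (A $$ (i,i)))"
    using A by (auto simp: tr_def)
  then show ?thesis using psd_diag[OF assms] by (auto intro: sum_nonneg)
qed

lemma psd_tr_mult: assumes "psd n P" "psd n Q" shows "Im (tr (P * Q)) = 0 \<and> Re (tr (P * Q)) \<ge> 0"
proof -
  define R where "R = msqrt P"
  have R: "R \<in> carrier_mat n n" "adj R = R" "R * R = P" using msqrt_carrier msqrt_herm msqrt(2) assms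
    unfolding R_def by auto
  have Q: "Q \<in> carrier_mat n n" using assms psd_carrier by auto
  have "tr (P * Q) = tr (R * (R * Q))" using R(3) assoc_sq[OF R(1) R(1) Q] by simp
  also have "\<dots> = tr ((R * Q) * R)" using R Q by (intro tr_comm) auto
  also have "(R * Q) * R = adj R * Q * R" using R by simp
  finally show ?thesis using psd_tr[OF psd_congr[OF assms(2) R(1)]] by simp
qed

lemma psd_one: "psd n (1\<^sub>m n)"
proof -
  have "1\<^sub>m n = dmat n (\<lambda>_. 1)" by (rule eq_matI) auto
  then show ?thesis using psd_dmat[of n "\<lambda>_. 1"] by simp
qed

lemma psd_gram: "X \<in> carrier_mat n m \<Longrightarrow> psd m (adj X * X)"
  using psd_congr[OF psd_one, of X n m] by simp

lemma cs_double:
  fixes a b :: "nat \<Rightarrow> nat \<Rightarrow> real"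
  shows "(\<Sum>i<n. \<Sum>k<n. a i k * b i k) \<le> sqrt (\<Sum>i<n. \<Sum>k<n. (a i k)\<^sup>2) * sqrt (\<Sum>i<n. \<Sum>k<n. (b i k)\<^sup>2)"
proof -
  let ?I = "{..<n} \<times> {..<n}"
  have eq: "\<And>f. (\<Sum>i<n. \<Sum>k<n. f i k) = (\<Sum>p\<in>?I. f (fst p) (snd p))"
    by (simp add: sum.cartesian_product case_prod_beta)
  have "(\<Sum>p\<in>?I. a (fst p) (snd p) * b (fst p) (snd p))\<^sup>2 \<le>
        (\<Sum>p\<in>?I. (a (fst p) (snd p))\<^sup>2) * (\<Sum>p\<in>?I. (b (fst p) (snd p))\<^sup>2)"
    by (rule Cauchy_Schwarz_ineq_sum)
  then have "(\<Sum>i<n. \<Sum>k<n. a i k * b i k)\<^sup>2 \<le> (\<Sum>i<n. \<Sum>k<n. (a i k)\<^sup>2) * (\<Sum>i<n. \<Sum>k<n. (b i k)\<^sup>2)"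
    unfolding eq .
  then have "sqrt ((\<Sum>i<n. \<Sum>k<n. a i k * b i k)\<^sup>2) \<le> sqrt ((\<Sum>i<n. \<Sum>k<n. (a i k)\<^sup>2) * (\<Sum>i<n. \<Sum>k<n. (b i k)\<^sup>2))"
    using real_sqrt_le_mono by blast
  then show ?thesis by (simp add: real_sqrt_mult)
qed

lemma tr_cs: assumes Y: "Y \<in> carrier_mat n n" and Z: "Z \<in> carrier_mat n n"
  shows "cmod (tr (adj Y * Z)) \<le> sqrt (Re (tr (adj Y * Y))) * sqrt (Re (tr (adj Z * Z)))"
proof -
  have trs: "tr (adj A * B) = (\<Sum>i<n. \<Sum>k<n. cnj (A $$ (k,i)) * B $$ (k,i))"
    if "A \<in> carrier_mat n n" "B \<in> carrier_mat n n" for A B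
  proof -
    have "tr (adj A * B) = (\<Sum>i<n. \<Sum>k<n. adj A $$ (i,k) * B $$ (k,i))"
      using tr_mult_sum[OF adj_carrier[OF that(1)] that(2)] .
    also have "\<dots> = (\<Sum>i<n. \<Sum>k<n. cnj (A $$ (k,i)) * B $$ (k,i))"
    proof (rule sum.cong[OF refl], rule sum.cong[OF refl])
      fix i k assume "i \<in> {..<n}" "k \<in> {..<n}"
      then show "adj A $$ (i,k) * B $$ (k,i) = cnj (A $$ (k,i)) * B $$ (k,i)" using that(1) by simp
    qed
    finally show ?thesis .
  qed
  have re: "Re (tr (adj A * A)) = (\<Sum>i<n. \<Sum>k<n. (cmod (A $$ (k,i)))\<^sup>2)" if "A \<in> carrier_mat n n" for A
  proof -
    have "\<And>z. Re (cnj z * z) = (cmod z)\<^sup>2" by (simp add: cmod_power2 power2_eq_square[symmetric])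
    then show ?thesis unfolding trs[OF that that] by (simp add: Re_sum)
  qed
  have "cmod (tr (adj Y * Z)) \<le> (\<Sum>i<n. cmod (\<Sum>k<n. cnj (Y $$ (k,i)) * Z $$ (k,i)))"
    unfolding trs[OF Y Z] by (rule norm_sum)
  also have "\<dots> \<le> (\<Sum>i<n. \<Sum>k<n. cmod (Y $$ (k,i)) * cmod (Z $$ (k,i)))"
    by (intro sum_mono order_trans[OF norm_sum]) (simp add: norm_mult)
  also have "\<dots> \<le> sqrt (\<Sum>i<n. \<Sum>k<n. (cmod (Y $$ (k,i)))\<^sup>2) * sqrt (\<Sum>i<n. \<Sum>k<n. (cmod (Z $$ (k,i)))\<^sup>2)"
    by (rule cs_double)
  finally show ?thesis unfolding re[OF Y] re[OF Z] .
qed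

lemma proj_psd: assumes Pr: "Pr \<in> carrier_mat n n" and h: "adj Pr = Pr" and idem: "Pr * Pr = Pr"
  shows "psd n (1\<^sub>m n - Pr)"
proof -
  define Z where "Z = 1\<^sub>m n - Pr"
  have Z: "Z \<in> carrier_mat n n" unfolding Z_def using Pr by auto
  have hZ: "adj Z = Z" unfolding Z_def using adj_minus[OF one_carrier_mat Pr] h by simp
  have "Z * Z = Z * 1\<^sub>m n - Z * Pr"
    using mult_minus_distrib_mat[OF Z one_carrier_mat Pr] unfolding Z_def[symmetric] by (simp add: Z_def)
  also have "Z * Pr = 1\<^sub>m n * Pr - Pr * Pr" unfolding Z_def using Pr by (subst minus_mult_distrib_mat[of _ n n]) auto
  also have "\<dots> = Pr - Pr" using idem Pr by simp
  finally have "Z * Z = Z * 1\<^sub>m n - (Pr - Pr)" .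
  also have "\<dots> = Z" by (rule eq_matI) (use Z Pr in auto)
  finally have ZZ: "adj Z * Z = Z" using hZ by simp
  have "psd n (adj Z * Z)" using psd_gram[OF Z] .
  then have "psd n Z" unfolding ZZ .
  then show ?thesis unfolding Z_def .
qed

lemma tr_le_proj: assumes M: "psd n M" and Pr: "Pr \<in> carrier_mat n n" and h: "adj Pr = Pr" and idem: "Pr * Pr = Pr"
  shows "Re (tr (M * Pr)) \<le> Re (tr M)"
proof -
  have Mc: "M \<in> carrier_mat n n" using M psd_carrier by auto
  have "Re (tr (M * (1\<^sub>m n - Pr))) \<ge> 0" using psd_tr_mult[OF M proj_psd[OF Pr h idem]] by simp
  moreover have "M * (1\<^sub>m n - Pr) = M - M * Pr" using Mc Pr by (subst mult_minus_distrib_mat[of _ n n]) auto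
  moreover have "tr (M - M * Pr) = tr M - tr (M * Pr)" using Mc Pr by (intro tr_minus) auto
  ultimately show ?thesis by simp
qed

lemma unitary_adj: "unitary n U \<Longrightarrow> unitary n (adj U)"
  unfolding unitary_def by auto

lemma adj_real_dmat: "adj (dmat n (\<lambda>i. complex_of_real (f i))) = dmat n (\<lambda>i. complex_of_real (f i))"
  unfolding adj_dmat by simp

lemma fid_bound:
  assumes r1: "psd n r1" and r2: "psd n r2" and P: "psd n P" and Q: "psd n (1\<^sub>m n - P)"
  shows "trace_norm (msqrt r1 * msqrt r2) \<le> sqrt (Re (tr (P * r1)) * Re (tr (P * r2)))
            + sqrt (Re (tr ((1\<^sub>m n - P) * r1)) * Re (tr ((1\<^sub>m n - P) * r2)))"
    and "trace_norm (msqrt r1 * msqrt r2) \<ge> 0"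
proof -
  define s1 where "s1 = msqrt r1"
  define s2 where "s2 = msqrt r2"
  have s1: "s1 \<in> carrier_mat n n" "adj s1 = s1" "s1 * s1 = r1"
    unfolding s1_def using msqrt_carrier[OF r1] msqrt_herm[OF r1] msqrt(2)[OF r1] by auto
  have s2: "s2 \<in> carrier_mat n n" "adj s2 = s2" "s2 * s2 = r2"
    unfolding s2_def using msqrt_carrier[OF r2] msqrt_herm[OF r2] msqrt(2)[OF r2] by auto
  have r1c: "r1 \<in> carrier_mat n n" and r2c: "r2 \<in> carrier_mat n n" and Pc: "P \<in> carrier_mat n n"
    using r1 r2 P psd_carrier by auto
  define X where "X = s1 * s2"
  have Xc: "X \<in> carrier_mat n n" unfolding X_def using s1 s2 by auto
  define G where "G = adj X * X"
  have Gc: "G \<in> carrier_mat n n" unfolding G_def using Xc by auto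
  have pG: "psd n G" unfolding G_def using psd_gram[OF Xc] .
  obtain V d where V: "unitary n V" and d: "\<forall>i<n. d i \<ge> 0"
    and GV: "G = V * dmat n (\<lambda>i. complex_of_real (d i)) * adj V"
    using psd_spectral[OF pG] by blast
  have Vc: "V \<in> carrier_mat n n" and VV: "adj V * V = 1\<^sub>m n" and VV': "V * adj V = 1\<^sub>m n"
    using V unfolding unitary_def by auto
  define D where "D = dmat n (\<lambda>i. complex_of_real (d i))"
  have Dc: "D \<in> carrier_mat n n" unfolding D_def by simp
  have tn: "trace_norm X = (\<Sum>i<n. sqrt (d i))"
  proof -
    have "trace_norm X = Re (tr (msqrt G))" unfolding trace_norm_def G_def ..
    also have "msqrt G = V * dmat n (\<lambda>i. complex_of_real (sqrt (d i))) * adj V"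
      unfolding GV using msqrt_spec[OF V d] .
    also have "tr \<dots> = tr (dmat n (\<lambda>i. complex_of_real (sqrt (d i))))"
      using tr_unitary_conj[OF V] by simp
    finally show ?thesis by (simp add: tr_dmat Re_sum)
  qed
  show "trace_norm (msqrt r1 * msqrt r2) \<ge> 0"
    using tn d unfolding X_def s1_def s2_def by (auto intro!: sum_nonneg)
  define t where "t i = (if d i > 0 then 1 / sqrt (d i) else 0)" for i
  define T where "T = dmat n (\<lambda>i. complex_of_real (t i))"
  have Tc: "T \<in> carrier_mat n n" unfolding T_def by simp
  have hT: "adj T = T" unfolding T_def by (rule adj_real_dmat)
  define W where "W = X * V * T"
  have Wc: "W \<in> carrier_mat n n" unfolding W_def using Xc Vc Tc by auto
  note cars = Xc Vc Tc Wc Dc Gc s1(1) s2(1) Pc r1c r2c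
  have DG: "adj V * G * V = D"
  proof -
    have "adj V * G * V = (adj V * V) * D * (adj V * V)"
      unfolding GV D_def[symmetric] using cars by (simp add: assoc_sq[of _ n] mult_sq_carrier)
    then show ?thesis using VV Dc by simp
  qed
  have adjW: "adj W = T * adj V * adj X"
    unfolding W_def using cars hT by (simp add: adj_mult[of _ n n _ n] assoc_sq[of _ n] mult_sq_carrier)
  have K1: "adj W * X * V = dmat n (\<lambda>i. complex_of_real (sqrt (d i)))"
  proof -
    have "adj W * X * V = T * (adj V * G * V)"
      unfolding adjW G_def using cars by (simp add: assoc_sq[of _ n] mult_sq_carrier)
    also have "\<dots> = dmat n (\<lambda>i. complex_of_real (t i) * complex_of_real (d i))"
      unfolding DG T_def D_def dmat_mult ..
    also have "\<dots> = dmat n (\<lambda>i. complex_of_real (sqrt (d i)))"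
    proof (rule eq_matI)
      fix i j assume "i < dim_row (dmat n (\<lambda>i. complex_of_real (sqrt (d i))))"
        "j < dim_col (dmat n (\<lambda>i. complex_of_real (sqrt (d i))))"
      then have ij: "i < n" "j < n" by auto
      have "t i * d i = sqrt (d i)"
      proof (cases "d i > 0")
        case True
        then have "sqrt (d i) * sqrt (d i) = d i" by simp
        then show ?thesis unfolding t_def using True by (simp add: field_simps)
      next
        case False
        then have "d i = 0" using d ij by force
        then show ?thesis unfolding t_def by simp
      qed
      then show "dmat n (\<lambda>i. complex_of_real (t i) * complex_of_real (d i)) $$ (i, j) =
          dmat n (\<lambda>i. complex_of_real (sqrt (d i))) $$ (i, j)" using ij by (auto simp flip: of_real_mult)
    qed auto
    finally show ?thesis .
  qed
  have K2: "adj W * W = T * D * T"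
  proof -
    have "adj W * W = T * (adj V * G * V) * T"
      unfolding adjW unfolding G_def W_def using cars by (simp add: assoc_sq[of _ n] mult_sq_carrier)
    then show ?thesis unfolding DG .
  qed
  have TDT: "T * (T * D * T) = T"
  proof -
    have "T * (T * D * T) = dmat n (\<lambda>i. complex_of_real (t i * (t i * d i * t i)))"
      unfolding T_def D_def dmat_mult of_real_mult ..
    also have "\<dots> = T" unfolding T_def
    proof (rule eq_matI)
      fix i j assume "i < dim_row (dmat n (\<lambda>i. complex_of_real (t i)))" "j < dim_col (dmat n (\<lambda>i. complex_of_real (t i)))"
      then have ij: "i < n" "j < n" by auto
      have tt: "t i * (t i * d i * t i) = t i"
      proof (cases "d i > 0")
        case True
        then have "sqrt (d i) * sqrt (d i) = d i" by simp
        then show ?thesis unfolding t_def using True by (simp add: field_simps)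
      qed (simp add: t_def)
      show "dmat n (\<lambda>i. complex_of_real (t i * (t i * d i * t i))) $$ (i, j) =
          dmat n (\<lambda>i. complex_of_real (t i)) $$ (i, j)" by (simp only: dmat_idx[OF ij] tt)
    qed auto
    finally show ?thesis .
  qed
  have WK: "W * (adj W * W) = W"
  proof -
    have "W * (adj W * W) = X * V * (T * (T * D * T))"
      unfolding K2 unfolding W_def using cars by (simp add: assoc_sq[of _ n] mult_sq_carrier)
    then show ?thesis unfolding TDT W_def .
  qed
  define Pr where "Pr = W * adj W"
  have Prc: "Pr \<in> carrier_mat n n" unfolding Pr_def using Wc by auto
  have hPr: "adj Pr = Pr" unfolding Pr_def using adj_mult[OF Wc adj_carrier[OF Wc]] by simp
  have PrPr: "Pr * Pr = Pr"
  proof -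
    have "Pr * Pr = (W * (adj W * W)) * adj W"
      unfolding Pr_def using cars by (simp add: assoc_sq[of _ n] mult_sq_carrier)
    then show ?thesis unfolding WK Pr_def .
  qed
  have gen: "cmod (tr (adj W * (s1 * R * s2) * V)) \<le> sqrt (Re (tr (R * r1))) * sqrt (Re (tr (R * r2)))"
    if R: "psd n R" for R
  proof -
    define a where "a = msqrt R"
    have a: "a \<in> carrier_mat n n" "adj a = a" "a * a = R"
      unfolding a_def using msqrt_carrier[OF R] msqrt_herm[OF R] msqrt(2)[OF R] by auto
    have Rc: "R \<in> carrier_mat n n" using R psd_carrier by auto
    define Y where "Y = a * s1 * W"
    define Z where "Z = a * s2 * V"
    have Yc: "Y \<in> carrier_mat n n" and Zc: "Z \<in> carrier_mat n n" unfolding Y_def Z_def using cars a by auto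
    have adjY: "adj Y = adj W * s1 * a"
      unfolding Y_def using cars a s1 by (simp add: adj_mult[of _ n n _ n] assoc_sq[of _ n] mult_sq_carrier)
    have adjZ: "adj Z = adj V * s2 * a"
      unfolding Z_def using cars a s2 by (simp add: adj_mult[of _ n n _ n] assoc_sq[of _ n] mult_sq_carrier)
    have eq1: "adj W * (s1 * R * s2) * V = adj Y * Z"
    proof -
      have "adj W * (s1 * R * s2) * V = adj W * (s1 * (a * a) * s2) * V" using a by simp
      also have "\<dots> = adj Y * Z" unfolding adjY Z_def using cars a(1) by (simp add: assoc_sq[of _ n] mult_sq_carrier)
      finally show ?thesis .
    qed
    define M1 where "M1 = s1 * R * s1"
    define M2 where "M2 = s2 * R * s2"
    have pM1: "psd n M1" unfolding M1_def using psd_congr[OF R s1(1)] s1 by simp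
    have M1c: "M1 \<in> carrier_mat n n" and M2c: "M2 \<in> carrier_mat n n" unfolding M1_def M2_def using cars Rc by auto
    have trM1: "tr M1 = tr (R * r1)"
    proof -
      have "tr M1 = tr (s1 * (R * s1))" unfolding M1_def using cars Rc by (simp add: assoc_sq[of _ n])
      also have "\<dots> = tr ((R * s1) * s1)" using cars Rc by (intro tr_comm) auto
      also have "(R * s1) * s1 = R * r1" using cars Rc s1 by (simp add: assoc_sq[of _ n])
      finally show ?thesis .
    qed
    have trM2: "tr M2 = tr (R * r2)"
    proof -
      have "tr M2 = tr (s2 * (R * s2))" unfolding M2_def using cars Rc by (simp add: assoc_sq[of _ n])
      also have "\<dots> = tr ((R * s2) * s2)" using cars Rc by (intro tr_comm) auto
      also have "(R * s2) * s2 = R * r2" using cars Rc s2 by (simp add: assoc_sq[of _ n])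
      finally show ?thesis .
    qed
    have y: "Re (tr (adj Y * Y)) \<le> Re (tr (R * r1))"
    proof -
      have "adj Y * Y = adj W * (M1 * W)" unfolding adjY unfolding Y_def M1_def using cars a(1) Rc
        by (simp add: assoc_sq[of _ n] mult_sq_carrier a(3)[symmetric])
      then have "tr (adj Y * Y) = tr ((M1 * W) * adj W)" using cars M1c by (simp add: tr_comm[of _ n n])
      also have "(M1 * W) * adj W = M1 * Pr" unfolding Pr_def using cars M1c by (simp add: assoc_sq[of _ n])
      finally have "Re (tr (adj Y * Y)) = Re (tr (M1 * Pr))" by simp
      also have "\<dots> \<le> Re (tr M1)" by (rule tr_le_proj[OF pM1 Prc hPr PrPr])
      finally show ?thesis unfolding trM1 .
    qed
    have z: "Re (tr (adj Z * Z)) = Re (tr (R * r2))"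
    proof -
      have "adj Z * Z = adj V * M2 * adj (adj V)" unfolding adjZ unfolding Z_def M2_def using cars a(1) Rc
        by (simp add: assoc_sq[of _ n] mult_sq_carrier a(3)[symmetric])
      then have "tr (adj Z * Z) = tr M2" using tr_unitary_conj[OF unitary_adj[OF V] M2c] by simp
      then show ?thesis unfolding trM2 by simp
    qed
    have "cmod (tr (adj W * (s1 * R * s2) * V)) \<le> sqrt (Re (tr (adj Y * Y))) * sqrt (Re (tr (adj Z * Z)))"
      unfolding eq1 using tr_cs[OF Yc Zc] .
    also have "\<dots> \<le> sqrt (Re (tr (R * r1))) * sqrt (Re (tr (R * r2)))"
      unfolding z using y psd_tr_mult[OF R r2] by (intro mult_right_mono) auto
    finally show ?thesis .
  qed
  define Q' where "Q' = 1\<^sub>m n - P"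
  have Q'c: "Q' \<in> carrier_mat n n" unfolding Q'_def using Pc by auto
  have Xsplit: "X = s1 * P * s2 + s1 * Q' * s2"
  proof -
    have "s1 * Q' = s1 - s1 * P" unfolding Q'_def using cars by (subst mult_minus_distrib_mat[of _ n n]) auto
    then have "s1 * Q' * s2 = s1 * s2 - s1 * P * s2" using cars by (simp add: minus_mult_distrib_mat[of _ n n])
    have e: "s1 * Q' * s2 = s1 * s2 - s1 * P * s2" by fact
    show ?thesis unfolding X_def e by (rule eq_matI) (use cars in auto)
  qed
  have WXV: "adj W * X * V = adj W * (s1 * P * s2) * V + adj W * (s1 * Q' * s2) * V"
  proof -
    have N1: "s1 * P * s2 \<in> carrier_mat n n" and N2: "s1 * Q' * s2 \<in> carrier_mat n n" using cars Q'c by auto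
    have "adj W * X = adj W * (s1 * P * s2) + adj W * (s1 * Q' * s2)"
      unfolding Xsplit by (rule mult_add_distrib_mat[OF adj_carrier[OF Wc] N1 N2])
    moreover have "(adj W * (s1 * P * s2) + adj W * (s1 * Q' * s2)) * V =
        adj W * (s1 * P * s2) * V + adj W * (s1 * Q' * s2) * V"
      by (rule add_mult_distrib_mat[OF mult_sq_carrier[OF adj_carrier[OF Wc] N1] mult_sq_carrier[OF adj_carrier[OF Wc] N2] Vc])
    ultimately show ?thesis by simp
  qed
  then have "tr (adj W * X * V) = tr (adj W * (s1 * P * s2) * V) + tr (adj W * (s1 * Q' * s2) * V)"
  proof -
    have c1: "adj W * (s1 * P * s2) * V \<in> carrier_mat n n" and c2: "adj W * (s1 * Q' * s2) * V \<in> carrier_mat n n"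
      using cars Q'c by (auto intro!: mult_sq_carrier)
    show ?thesis unfolding WXV by (rule tr_add[OF c1 c2])
  qed
  moreover have "Re (tr (adj W * X * V)) = trace_norm X"
    unfolding K1 tn by (simp add: tr_dmat Re_sum)
  ultimately have "trace_norm X \<le> cmod (tr (adj W * (s1 * P * s2) * V)) + cmod (tr (adj W * (s1 * Q' * s2) * V))"
    by (metis complex_Re_le_cmod norm_triangle_ineq order_trans plus_complex.sel(1))
  also have "\<dots> \<le> sqrt (Re (tr (P * r1))) * sqrt (Re (tr (P * r2))) + sqrt (Re (tr (Q' * r1))) * sqrt (Re (tr (Q' * r2)))"
    using gen[OF P] gen[OF Q[folded Q'_def]] by simp
  finally show "trace_norm (msqrt r1 * msqrt r2) \<le> sqrt (Re (tr (P * r1)) * Re (tr (P * r2)))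
            + sqrt (Re (tr ((1\<^sub>m n - P) * r1)) * Re (tr ((1\<^sub>m n - P) * r2)))"
    unfolding X_def s1_def s2_def Q'_def by (simp add: real_sqrt_mult)
qed

lemma classical_fvdg:
  fixes x y x' y' :: real
  assumes "x \<ge> 0" "y \<ge> 0" "x' \<ge> 0" "y' \<ge> 0" "x\<^sup>2 + x'\<^sup>2 = 1" "y\<^sup>2 + y'\<^sup>2 = 1"
  shows "(x\<^sup>2 - y\<^sup>2)\<^sup>2 \<le> 1 - (x * y + x' * y')\<^sup>2"
proof -
  have e1: "1 - (x * y + x' * y')\<^sup>2 = (x * y' - x' * y)\<^sup>2"
  proof -
    have "1 - (x * y + x' * y')\<^sup>2 = (x\<^sup>2 + x'\<^sup>2) * (y\<^sup>2 + y'\<^sup>2) - (x * y + x' * y')\<^sup>2" using assms by simp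
    also have "\<dots> = (x * y' - x' * y)\<^sup>2" by (simp add: power2_eq_square algebra_simps)
    finally show ?thesis .
  qed
  have e2: "x\<^sup>2 - y\<^sup>2 = (x * y' - x' * y) * (x * y' + x' * y)"
  proof -
    have "x\<^sup>2 - y\<^sup>2 = x\<^sup>2 * (y\<^sup>2 + y'\<^sup>2) - y\<^sup>2 * (x\<^sup>2 + x'\<^sup>2)" using assms by simp
    also have "\<dots> = (x * y' - x' * y) * (x * y' + x' * y)" by (simp add: power2_eq_square algebra_simps)
    finally show ?thesis .
  qed
  have b: "(x * y' + x' * y)\<^sup>2 \<le> 1"
  proof -
    have "(x * y' + x' * y)\<^sup>2 + (x * y - x' * y')\<^sup>2 = (x\<^sup>2 + x'\<^sup>2) * (y\<^sup>2 + y'\<^sup>2)"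
      by (simp add: power2_eq_square algebra_simps)
    then have "(x * y' + x' * y)\<^sup>2 + (x * y - x' * y')\<^sup>2 = 1" using assms(5,6) by simp
    moreover have "(x * y - x' * y')\<^sup>2 \<ge> 0" by simp
    ultimately show ?thesis by linarith
  qed
  have "(x\<^sup>2 - y\<^sup>2)\<^sup>2 = (x * y' - x' * y)\<^sup>2 * (x * y' + x' * y)\<^sup>2" unfolding e2 by (simp add: power_mult_distrib)
  also have "\<dots> \<le> (x * y' - x' * y)\<^sup>2 * 1" using b by (intro mult_left_mono) auto
  finally show ?thesis using e1 by simp
qed

lemma classical_fvdg2:
  fixes p q f e :: real
  assumes p: "0 \<le> p" "p \<le> 1" and q: "0 \<le> q" "q \<le> 1" and f: "0 \<le> f"
    and fb: "f \<le> sqrt (q * p) + sqrt ((1 - q) * (1 - p))" and fe: "f\<^sup>2 \<ge> 1 - e"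
  shows "p - q \<le> sqrt e"
proof -
  define x where "x = sqrt p"
  define y where "y = sqrt q"
  define x' where "x' = sqrt (1 - p)"
  define y' where "y' = sqrt (1 - q)"
  have sq: "x\<^sup>2 = p" "y\<^sup>2 = q" "x'\<^sup>2 = 1 - p" "y'\<^sup>2 = 1 - q" unfolding x_def y_def x'_def y'_def using p q by auto
  have nn: "x \<ge> 0" "y \<ge> 0" "x' \<ge> 0" "y' \<ge> 0" unfolding x_def y_def x'_def y'_def using p q by auto
  have s: "sqrt (q * p) + sqrt ((1 - q) * (1 - p)) = x * y + x' * y'"
    unfolding x_def y_def x'_def y'_def by (simp add: real_sqrt_mult mult.commute)
  have c: "(p - q)\<^sup>2 \<le> 1 - (x * y + x' * y')\<^sup>2"
    using classical_fvdg[OF nn(1) nn(2) nn(3) nn(4)] sq by simp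
  have "f\<^sup>2 \<le> (x * y + x' * y')\<^sup>2" using fb f unfolding s by (intro power_mono) auto
  then have "(p - q)\<^sup>2 \<le> e" using c fe by linarith
  then have "sqrt ((p - q)\<^sup>2) \<le> sqrt e" by (rule real_sqrt_le_mono)
  then show ?thesis by simp
qed

lemma tr_one_minus: assumes "P \<in> carrier_mat n n" "r \<in> carrier_mat n n" "tr r = 1"
  shows "Re (tr ((1\<^sub>m n - P) * r)) = 1 - Re (tr (P * r))"
proof -
  have "(1\<^sub>m n - P) * r = r - P * r" using assms by (subst minus_mult_distrib_mat[of _ n n]) auto
  then have "tr ((1\<^sub>m n - P) * r) = tr r - tr (P * r)" using assms by (simp add: tr_minus[of _ n])
  then show ?thesis using assms by simp
qed

lemma state_bound:
  fixes e1 e2 l :: real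
  assumes e1: "e1 \<ge> 0" and e2: "e2 \<ge> 0" and ee: "e1 + sqrt e2 < 1"
    and r: "psd n r" "tr r = 1" and r': "psd n r'" "tr r' = 1" and s: "psd n s"
    and P: "psd n P" "loewner_le n P (1\<^sub>m n)" and Pr: "Re (tr (P * r)) \<ge> 1 - e1"
    and F: "fidelity r' r \<ge> 1 - e2"
    and L: "loewner_le n r' (complex_of_real (2 powr l) \<cdot>\<^sub>m s)"
  shows "neglog2 (Re (tr (P * s))) \<le> ereal (l + log 2 (1 / (1 - e1 - sqrt e2)))"
proof -
  have rc: "r \<in> carrier_mat n n" and r'c: "r' \<in> carrier_mat n n" and sc: "s \<in> carrier_mat n n"
    and Pc: "P \<in> carrier_mat n n" using r r' s P psd_carrier by auto
  have Q: "psd n (1\<^sub>m n - P)" using P(2) unfolding loewner_le_def by auto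
  define p where "p = Re (tr (P * r))"
  define q where "q = Re (tr (P * r'))"
  have p0: "p \<ge> 0" unfolding p_def using psd_tr_mult[OF P(1) r(1)] by simp
  have q0: "q \<ge> 0" unfolding q_def using psd_tr_mult[OF P(1) r'(1)] by simp
  have p1: "p \<le> 1" unfolding p_def using psd_tr_mult[OF Q r(1)] tr_one_minus[OF Pc rc r(2)] by simp
  have q1: "q \<le> 1" unfolding q_def using psd_tr_mult[OF Q r'(1)] tr_one_minus[OF Pc r'c r'(2)] by simp
  define f where "f = trace_norm (msqrt r' * msqrt r)"
  have fb: "f \<le> sqrt (q * p) + sqrt ((1 - q) * (1 - p))"
    using fid_bound(1)[OF r'(1) r(1) P(1) Q] tr_one_minus[OF Pc rc r(2)] tr_one_minus[OF Pc r'c r'(2)]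
    unfolding f_def p_def q_def by simp
  have f0: "f \<ge> 0" using fid_bound(2)[OF r'(1) r(1) P(1) Q] unfolding f_def .
  have fe: "f\<^sup>2 \<ge> 1 - e2" using F unfolding fidelity_def f_def .
  have pq: "p - q \<le> sqrt e2" by (rule classical_fvdg2[OF p0 p1 q0 q1 f0 fb fe])
  define c where "c = 1 - e1 - sqrt e2"
  have c0: "c > 0" unfolding c_def using ee by simp
  have qc: "q \<ge> c" unfolding c_def using pq Pr unfolding p_def by simp
  define t where "t = 2 powr l"
  have t0: "t > 0" unfolding t_def by simp
  have "psd n (complex_of_real t \<cdot>\<^sub>m s - r')" using L unfolding loewner_le_def t_def by auto
  then have nn: "Re (tr (P * (complex_of_real t \<cdot>\<^sub>m s - r'))) \<ge> 0" using psd_tr_mult[OF P(1)] by blast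
  have "P * (complex_of_real t \<cdot>\<^sub>m s - r') = complex_of_real t \<cdot>\<^sub>m (P * s) - P * r'"
    using mult_minus_distrib_mat[OF Pc smult_carrier_mat[OF sc] r'c] mult_smult_distrib[OF Pc sc] by simp
  then have "tr (P * (complex_of_real t \<cdot>\<^sub>m s - r')) = complex_of_real t * tr (P * s) - tr (P * r')"
    using Pc sc r'c by (simp add: tr_minus[of _ n] tr_smult[of _ n])
  then have "t * Re (tr (P * s)) \<ge> q" using nn unfolding q_def by simp
  then have ts: "t * Re (tr (P * s)) \<ge> c" using qc by simp
  then have "t * Re (tr (P * s)) > 0" using c0 by linarith
  then have sp: "Re (tr (P * s)) > 0" using t0 by (simp add: zero_less_mult_iff)
  have "Re (tr (P * s)) \<ge> c / t" using ts t0 by (simp add: field_simps)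
  then have "log 2 (Re (tr (P * s))) \<ge> log 2 (c / t)" using c0 t0 by (intro log_mono) auto
  also have "log 2 (c / t) = log 2 c - l" unfolding t_def using c0 by (simp add: log_divide)
  finally have "- log 2 (Re (tr (P * s))) \<le> l + log 2 (1 / c)" using c0 by (simp add: log_divide)
  then show ?thesis unfolding neglog2_def c_def using sp by simp
qed

lemma sum_lessThan_add: "(\<Sum>r<m + d. f r) = (\<Sum>r<m. f r) + (\<Sum>i<d. f (m + i))" for f :: "nat \<Rightarrow> 'a::comm_monoid_add"
  by (induction d) (simp_all add: add.assoc)

lemma sum_blocks: "(\<Sum>r<k * d. f r) = (\<Sum>a<k. \<Sum>i<d. f (a * d + i))" for f :: "nat \<Rightarrow> 'a::comm_monoid_add"
proof (induction k)
  case (Suc k)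
  have "(\<Sum>r<Suc k * d. f r) = (\<Sum>r<k * d + d. f r)" by (simp add: add.commute)
  also have "\<dots> = (\<Sum>r<k * d. f r) + (\<Sum>i<d. f (k * d + i))" by (rule sum_lessThan_add)
  finally show ?case using Suc by simp
qed simp

lemma pure_state: assumes "\<psi> \<in> pure_states k d" shows "psd (k * d) \<psi>" "tr \<psi> = 1"
proof -
  let ?N = "k * d"
  obtain v where v: "v \<in> carrier_vec ?N" "(\<Sum>i<?N. (cmod (v $ i))\<^sup>2) = 1"
    and psi: "\<psi> = mat ?N ?N (\<lambda>(i,j). v $ i * cnj (v $ j))"
    using assms unfolding pure_states_def by blast
  show "tr \<psi> = 1"
  proof -
    have "tr \<psi> = (\<Sum>i<?N. v $ i * cnj (v $ i))" unfolding psi tr_def by simp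
    also have "\<dots> = (\<Sum>i<?N. complex_of_real ((cmod (v $ i))\<^sup>2))"
      by (intro sum.cong refl) (simp add: complex_mult_cnj cmod_power2)
    also have "\<dots> = complex_of_real (\<Sum>i<?N. (cmod (v $ i))\<^sup>2)" by (rule of_real_sum[symmetric])
    also have "\<dots> = 1" using v(2) by simp
    finally show ?thesis .
  qed
  show "psd ?N \<psi>" unfolding psd_def Let_def
  proof (intro conjI ballI)
    show "\<psi> \<in> carrier_mat ?N ?N" unfolding psi by simp
    fix x :: "complex vec" assume x: "x \<in> carrier_vec ?N"
    define z where "z = (\<Sum>i<?N. cnj (x $ i) * v $ i)"
    have "(\<Sum>i<?N. \<Sum>j<?N. cnj (x $ i) * \<psi> $$ (i,j) * x $ j) = (\<Sum>i<?N. \<Sum>j<?N. (cnj (x $ i) * v $ i) * (cnj (v $ j) * x $ j))"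
      unfolding psi by (intro sum.cong refl) (simp add: mult_ac)
    also have "\<dots> = z * cnj z" unfolding z_def by (simp add: sum_product mult_ac)
    also have "\<dots> = complex_of_real ((cmod z)\<^sup>2)" by (simp add: complex_mult_cnj cmod_power2)
    finally have eq: "(\<Sum>i<?N. \<Sum>j<?N. cnj (x $ i) * \<psi> $$ (i,j) * x $ j) = complex_of_real ((cmod z)\<^sup>2)" .
    show "Im (\<Sum>i<?N. \<Sum>j<?N. cnj (x $ i) * \<psi> $$ (i,j) * x $ j) = 0" unfolding eq by simp
    show "Re (\<Sum>i<?N. \<Sum>j<?N. cnj (x $ i) * \<psi> $$ (i,j) * x $ j) \<ge> 0" unfolding eq by simp
  qed
qed

lemma tr_id_tensor: assumes ch: "channel din dout E" and X: "X \<in> carrier_mat (k * din) (k * din)"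
  shows "tr (id_tensor k din dout E X) = tr X"
proof -
  have Ec: "E (block din X a a) \<in> carrier_mat dout dout" for a
    using ch unfolding channel_def block_def by auto
  have Et: "tr (E (block din X a a)) = tr (block din X a a)" for a
    using ch unfolding channel_def block_def by auto
  have "tr (id_tensor k din dout E X) = (\<Sum>r<k * dout. E (block din X (r div dout) (r div dout)) $$ (r mod dout, r mod dout))"
    unfolding id_tensor_def tr_def by simp
  also have "\<dots> = (\<Sum>a<k. \<Sum>i<dout. E (block din X ((a * dout + i) div dout) ((a * dout + i) div dout)) $$ ((a * dout + i) mod dout, (a * dout + i) mod dout))"
    by (rule sum_blocks)
  also have "\<dots> = (\<Sum>a<k. \<Sum>i<dout. E (block din X a a) $$ (i, i))"
    by (intro sum.cong refl) auto
  also have "\<dots> = (\<Sum>a<k. tr (E (block din X a a)))"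
  proof (intro sum.cong refl)
    fix a have "dim_row (E (block din X a a)) = dout" using Ec[of a] by auto
    then show "(\<Sum>i<dout. E (block din X a a) $$ (i, i)) = tr (E (block din X a a))" by (simp add: tr_def)
  qed
  also have "\<dots> = (\<Sum>a<k. tr (block din X a a))" using Et by simp
  also have "\<dots> = (\<Sum>a<k. \<Sum>i<din. X $$ (a * din + i, a * din + i))"
    by (intro sum.cong refl) (simp add: tr_def block_def)
  also have "\<dots> = (\<Sum>r<k * din. X $$ (r, r))" by (rule sum_blocks[symmetric])
  also have "\<dots> = tr X" using X by (simp add: tr_def)
  finally show ?thesis .
qed

lemma channel_state: assumes ch: "channel din dout E" and psi: "\<psi> \<in> pure_states k din"
  shows "psd (k * dout) (id_tensor k din dout E \<psi>)" "tr (id_tensor k din dout E \<psi>) = 1"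
proof -
  have p: "psd (k * din) \<psi>" and t: "tr \<psi> = 1" using pure_state[OF psi] by auto
  show "psd (k * dout) (id_tensor k din dout E \<psi>)" using ch p unfolding channel_def by blast
  show "tr (id_tensor k din dout E \<psi>) = 1" using tr_id_tensor[OF ch psd_carrier[OF p]] t by simp
qed

theorem lemma4:
  fixes \<epsilon>1 \<epsilon>2 :: real and din dout :: nat and E M :: "complex mat \<Rightarrow> complex mat"
  assumes "\<epsilon>1 \<ge> 0" and "\<epsilon>2 \<ge> 0" and "\<epsilon>1 + sqrt \<epsilon>2 < 1"
    and "channel din dout E" and "channel din dout M"
  shows "channel_DH \<epsilon>1 din dout E M
           \<le> channel_Dmax_smooth \<epsilon>2 din dout E M + ereal (log 2 (1 / (1 - \<epsilon>1 - sqrt \<epsilon>2)))"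
proof -
  note e1 = assms(1) and e2 = assms(2) and ee = assms(3) and chE = assms(4) and chM = assms(5)
  define L where "L = log 2 (1 / (1 - \<epsilon>1 - sqrt \<epsilon>2))"
  define DHS where "DHS = {DH \<epsilon>1 (k*dout) (id_tensor k din dout E \<psi>) (id_tensor k din dout M \<psi>) | k \<psi>.
       \<psi> \<in> pure_states k din}"
  define T where "T = {Sup {Dmax (k*dout) (id_tensor k din dout E' \<psi>) (id_tensor k din dout M \<psi>) | k \<psi>.
       \<psi> \<in> pure_states k din} | E'. channel din dout E' \<and> channel_fidelity din dout E' E \<ge> 1 - \<epsilon>2}"
  have lhs: "channel_DH \<epsilon>1 din dout E M = Sup DHS" unfolding channel_DH_def DHS_def ..
  have rhs: "channel_Dmax_smooth \<epsilon>2 din dout E M = Inf T" unfolding channel_Dmax_smooth_def T_def ..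
  have Lfin: "\<bar>ereal L\<bar> \<noteq> \<infinity>" by simp
  have key: "x \<le> t + ereal L" if x: "x \<in> DHS" and t: "t \<in> T" for x t
  proof -
    obtain k \<psi> where xe: "x = DH \<epsilon>1 (k*dout) (id_tensor k din dout E \<psi>) (id_tensor k din dout M \<psi>)"
      and psi: "\<psi> \<in> pure_states k din" using x unfolding DHS_def by blast
    obtain E' where chE': "channel din dout E'" and fE': "channel_fidelity din dout E' E \<ge> 1 - \<epsilon>2"
      and te: "t = Sup {Dmax (k*dout) (id_tensor k din dout E' \<psi>) (id_tensor k din dout M \<psi>) | k \<psi>.
       \<psi> \<in> pure_states k din}" using t unfolding T_def by blast
    define n where "n = k * dout"
    define r where "r = id_tensor k din dout E \<psi>"
    define r' where "r' = id_tensor k din dout E' \<psi>"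
    define s where "s = id_tensor k din dout M \<psi>"
    have r: "psd n r" "tr r = 1" unfolding r_def n_def using channel_state[OF chE psi] by auto
    have r': "psd n r'" "tr r' = 1" unfolding r'_def n_def using channel_state[OF chE' psi] by auto
    have s: "psd n s" unfolding s_def n_def using channel_state[OF chM psi] by auto
    have F: "fidelity r' r \<ge> 1 - \<epsilon>2"
    proof -
      have mem: "fidelity r' r \<in> {fidelity (id_tensor k din dout E' \<psi>) (id_tensor k din dout E \<psi>) | k \<psi>.
         \<psi> \<in> pure_states k din}" unfolding r_def r'_def using psi by blast
      have bdd: "bdd_below {fidelity (id_tensor k din dout E' \<psi>) (id_tensor k din dout E \<psi>) | k \<psi>.
         \<psi> \<in> pure_states k din}" by (rule bdd_belowI[of _ 0]) (auto simp: fidelity_def)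
      have "channel_fidelity din dout E' E \<le> fidelity r' r"
        unfolding channel_fidelity_def by (rule cInf_lower[OF mem bdd])
      then show ?thesis using fE' by simp
    qed
    define dm where "dm = Dmax n r' s"
    have dmt: "dm \<le> t" unfolding te dm_def n_def r'_def s_def by (rule Sup_upper) (use psi in blast)
    have "x - ereal L \<le> dm" unfolding dm_def Dmax_def
    proof (rule Inf_greatest)
      fix y assume "y \<in> {ereal l | l. loewner_le n r' (complex_of_real (2 powr l) \<cdot>\<^sub>m s)}"
      then obtain l where ye: "y = ereal l" and Ll: "loewner_le n r' (complex_of_real (2 powr l) \<cdot>\<^sub>m s)" by blast
      have "x \<le> ereal (l + L)" unfolding xe DH_def
      proof (rule Sup_least)
        fix z assume "z \<in> {neglog2 (Re (tr (P * id_tensor k din dout M \<psi>))) | P.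
          psd (k * dout) P \<and> loewner_le (k * dout) P (1\<^sub>m (k * dout)) \<and> Re (tr (P * id_tensor k din dout E \<psi>)) \<ge> 1 - \<epsilon>1}"
        then obtain P where ze: "z = neglog2 (Re (tr (P * s)))" and P: "psd n P" "loewner_le n P (1\<^sub>m n)"
          and Pr: "Re (tr (P * r)) \<ge> 1 - \<epsilon>1" unfolding s_def r_def n_def by blast
        show "z \<le> ereal (l + L)" unfolding ze L_def
          by (rule state_bound[OF e1 e2 ee r r' s P Pr F Ll])
      qed
      then show "x - ereal L \<le> y" unfolding ye using ereal_minus_le[OF Lfin] by simp
    qed
    then have "x \<le> dm + ereal L" using ereal_minus_le[OF Lfin] by simp
    also have "\<dots> \<le> t + ereal L" using dmt by (rule add_right_mono)
    finally show ?thesis .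
  qed
  have "Sup DHS - ereal L \<le> Inf T"
  proof (rule Inf_greatest)
    fix t assume t: "t \<in> T"
    have "Sup DHS \<le> t + ereal L" by (rule Sup_least) (use key t in blast)
    then show "Sup DHS - ereal L \<le> t" using ereal_minus_le[OF Lfin] by simp
  qed
  then have "Sup DHS \<le> Inf T + ereal L" using ereal_minus_le[OF Lfin] by simp
  then show ?thesis unfolding lhs rhs L_def .
qed

end
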